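(* Let $X,A$ be non-empty finite sets, $\mathcal R$ a resource over $(X,A)$, $H_R$ a Hilbert space, $\xi\in\mathbb C^X\otimes H_R$ a unit vector, and $P\in\mathcal B(\mathbb C^A\otimes H_R)$ a positive contraction with countable discrete spectrum and spectral decomposition $P=\sum_{n=1}^\infty\lambda_n\gamma_n\gamma_n^*$. Let $\rho_n=\sqrt{\lambda_n}\,\overline{{\rm Tr}_R(\xi\gamma_n^* )}\in\mathcal S_1^{A,X}$, $n\in\mathbb N$. Then $$\omega_{\mathcal R}(\xi,P)=\|[\rho_n]_{n\in\mathbb N}\|^2_{M_{\infty,1}(\mathcal O^{\mathcal R}_{X,A})}.$$
   Context: $\mathcal S_1^{A,X}$ is the space of linear operators $\mathbb C^A\to\mathbb C^X$ with matrix units $\epsilon_{x,a}=e_xe_a^*$; ${\rm Tr}_R$ is the partial trace over $H_R$, so ${\rm Tr}_R(\xi\gamma_n^* )\in\mathcal S_1^{A,X}$, and the overline denotes entrywise complex conjugation with respect to the standard bases. A block operator isometry over $(X,A)$ is an isometry $U=(U_{a,x})_{a\in A,x\in X}:H^X\to K^A$, $U_{a,x}\in\mathcal B(H,K)$; $\phi_U:\mathcal S_1^{A,X}\to\mathcal B(H,K)$ is linear with $\phi_U(\epsilon_{x,a})=U_{a,x}$. For a normal state $\sigma$ on $\mathcal B(H)$, $\Gamma_{U,\sigma}:M_X\to M_A$ is the channel $\Gamma_{U,\sigma}(\epsilon_{x,x'})=\sum_{a,a'\in A}\sigma(U_{a,x}^*U_{a',x'})\epsilon_{a,a'}$. A resource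 over $(X,A)$ is a family $\mathcal R$ of block operator isometries (with varying Hilbert spaces) closed under finite direct sums (entries $U_{a,x}\oplus U'_{a,x}$) and separating (for each nonzero $S\in\mathcal S_1^{A,X}$ some $U\in\mathcal R$ has $\phi_U(S)\neq0$). $\mathsf{QC}(\mathcal R)=\{\Gamma_{U,\sigma}:U\in\mathcal R,\ \sigma\text{ a normal state}\}$, and $\omega_{\mathcal R}(\xi,P)=\sup_{\Gamma\in\mathsf{QC}(\mathcal R)}{\rm Tr}((\Gamma\otimes{\rm id})(\xi\xi^* )P)$. $\mathcal O^{\mathcal R}_{X,A}$ is the vector space $\mathcal S_1^{A,X}$ with the operator space structure $\|u\|^{(n)}=\sup_{U\in\mathcal R}\|\phi_U^{(n)}(u)\|$, $u\in M_n(\mathcal S_1^{A,X})$. For a column $[\rho_n]_{n\in\mathbb N}$, $\|[\rho_n]\|_{M_{\infty,1}}=\sup_N\|[\rho_n]_{n=1}^N\|_{M_{N,1}}$. *)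

theory Defs
  imports "HOL-Analysis.Analysis"
begin

text \<open>Every Hilbert space is realised as l2(I) for an index set I.
  Vectors are functions into complex vanishing off I; bounded operators l2(J) to l2(I)
  are given by their matrices M i j = inner (M e_j) e_i.\<close>

definition l2 :: "'i set \<Rightarrow> ('i \<Rightarrow> complex) \<Rightarrow> bool" where
  "l2 I f \<longleftrightarrow> (\<forall>i. i \<notin> I \<longrightarrow> f i = 0) \<and> (\<lambda>i. (cmod (f i))^2) summable_on UNIV"

definition vnorm :: "('i \<Rightarrow> complex) \<Rightarrow> real" where
  "vnorm f = sqrt (infsum (\<lambda>i. (cmod (f i))^2) UNIV)"

text \<open>Inner product, linear in the first argument.\<close>
definition vinner :: "('i \<Rightarrow> complex) \<Rightarrow> ('i \<Rightarrow> complex) \<Rightarrow> complex" where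
  "vinner f g = infsum (\<lambda>i. f i * cnj (g i)) UNIV"

definition mapply :: "('i \<Rightarrow> 'j \<Rightarrow> complex) \<Rightarrow> ('j \<Rightarrow> complex) \<Rightarrow> ('i \<Rightarrow> complex)" where
  "mapply M f = (\<lambda>i. infsum (\<lambda>j. M i j * f j) UNIV)"

definition mmul :: "('i \<Rightarrow> 'j \<Rightarrow> complex) \<Rightarrow> ('j \<Rightarrow> 'k \<Rightarrow> complex) \<Rightarrow> ('i \<Rightarrow> 'k \<Rightarrow> complex)" where
  "mmul M N = (\<lambda>i k. infsum (\<lambda>j. M i j * N j k) UNIV)"

definition adj :: "('i \<Rightarrow> 'j \<Rightarrow> complex) \<Rightarrow> ('j \<Rightarrow> 'i \<Rightarrow> complex)" where
  "adj M = (\<lambda>j i. cnj (M i j))"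

definition bop :: "'j set \<Rightarrow> 'i set \<Rightarrow> ('i \<Rightarrow> 'j \<Rightarrow> complex) \<Rightarrow> bool" where
  "bop J I M \<longleftrightarrow> (\<forall>i j. (i \<notin> I \<or> j \<notin> J) \<longrightarrow> M i j = 0) \<and>
     (\<exists>C. \<forall>f. l2 J f \<longrightarrow> (\<forall>i. (\<lambda>j. M i j * f j) summable_on UNIV) \<and>
              l2 I (mapply M f) \<and> vnorm (mapply M f) \<le> C * vnorm f)"

definition opnorm :: "'j set \<Rightarrow> ('i \<Rightarrow> 'j \<Rightarrow> complex) \<Rightarrow> real" where
  "opnorm J M = Sup {vnorm (mapply M f) | f. l2 J f \<and> vnorm f \<le> 1}"

definition positive_op :: "('i \<Rightarrow> 'i \<Rightarrow> complex) \<Rightarrow> bool" where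
  "positive_op P \<longleftrightarrow> (\<forall>f. l2 UNIV f \<longrightarrow>
      Im (vinner (mapply P f) f) = 0 \<and> 0 \<le> Re (vinner (mapply P f) f))"

definition mtrace :: "('i \<Rightarrow> 'i \<Rightarrow> complex) \<Rightarrow> complex" where
  "mtrace M = infsum (\<lambda>i. M i i) UNIV"

definition rank1 :: "('i \<Rightarrow> complex) \<Rightarrow> ('j \<Rightarrow> complex) \<Rightarrow> ('i \<Rightarrow> 'j \<Rightarrow> complex)" where
  "rank1 u v = (\<lambda>i j. u i * cnj (v j))"

text \<open>Partial trace over H_R = l2('r): C^A (x) H_R \<rightarrow> C^X (x) H_R  to  C^A \<rightarrow> C^X.\<close>
definition ptraceR :: "('x \<times> 'r \<Rightarrow> 'a \<times> 'r \<Rightarrow> complex) \<Rightarrow> ('x \<Rightarrow> 'a \<Rightarrow> complex)" where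
  "ptraceR M = (\<lambda>x a. infsum (\<lambda>r. M (x, r) (a, r)) UNIV)"

text \<open>Block operator over (X,A): family of entries U a x : l2(I) \<rightarrow> l2(J);
  the full operator l2(X \<times> I) \<rightarrow> l2(A \<times> J).\<close>
definition blockmat :: "('a \<Rightarrow> 'x \<Rightarrow> 'u \<Rightarrow> 'v \<Rightarrow> complex) \<Rightarrow> ('a \<times> 'u \<Rightarrow> 'x \<times> 'v \<Rightarrow> complex)" where
  "blockmat U = (\<lambda>(a, j) (x, i). U a x j i)"

definition block_isometry :: "'v set \<Rightarrow> 'u set \<Rightarrow> ('a \<Rightarrow> 'x \<Rightarrow> 'u \<Rightarrow> 'v \<Rightarrow> complex) \<Rightarrow> bool" where
  "block_isometry I J U \<longleftrightarrow> (\<forall>a x. bop I J (U a x)) \<and>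
     (\<forall>f. l2 (UNIV \<times> I) f \<longrightarrow> vnorm (mapply (blockmat U) f) = vnorm f)"

text \<open>phi_U(S) = sum S_{x,a} U_{a,x}, where S : C^A \<rightarrow> C^X has entries S x a.\<close>
definition phiU :: "('a::finite \<Rightarrow> 'x::finite \<Rightarrow> 'u \<Rightarrow> 'v \<Rightarrow> complex) \<Rightarrow> ('x \<Rightarrow> 'a \<Rightarrow> complex) \<Rightarrow> ('u \<Rightarrow> 'v \<Rightarrow> complex)" where
  "phiU U S = (\<lambda>j i. \<Sum>x\<in>UNIV. \<Sum>a\<in>UNIV. S x a * U a x j i)"

definition dsum_mat :: "('u \<Rightarrow> 'v \<Rightarrow> complex) \<Rightarrow> ('u \<Rightarrow> 'v \<Rightarrow> complex) \<Rightarrow> ('u + 'u \<Rightarrow> 'v + 'v \<Rightarrow> complex)" where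
  "dsum_mat M M' = (\<lambda>p q. case (p, q) of (Inl j, Inl i) \<Rightarrow> M j i | (Inr j, Inr i) \<Rightarrow> M' j i | _ \<Rightarrow> 0)"

text \<open>A resource over (X,A): block operator isometries (Hilbert spaces l2(I), l2(J), I,J \<subseteq> 'u),
  closed under finite direct sums (up to relabelling of the bases), separating.\<close>
definition resource :: "('u set \<times> 'u set \<times> ('a::finite \<Rightarrow> 'x::finite \<Rightarrow> 'u \<Rightarrow> 'u \<Rightarrow> complex)) set \<Rightarrow> bool" where
  "resource R \<longleftrightarrow>
     (\<forall>(I, J, U) \<in> R. block_isometry I J U) \<and>
     (\<forall>(I, J, U) \<in> R. \<forall>(I', J', U') \<in> R. \<exists>(I'', J'', W) \<in> R. \<exists>p q.
         bij_betw p I'' (I <+> I') \<and> bij_betw q J'' (J <+> J') \<and>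
         (\<forall>a x j i. j \<in> J'' \<longrightarrow> i \<in> I'' \<longrightarrow> W a x j i = dsum_mat (U a x) (U' a x) (q j) (p i))) \<and>
     (\<forall>S :: 'x \<Rightarrow> 'a \<Rightarrow> complex. S \<noteq> (\<lambda>_ _. 0) \<longrightarrow> (\<exists>(I, J, U) \<in> R. phiU U S \<noteq> (\<lambda>_ _. 0)))"

text \<open>Normal state on B(l2(I)), given by a density operator sum_n v_n v_n^*:
  sigma(T) = sum_n <T v_n, v_n>, sum_n |v_n|^2 = 1.\<close>
definition normal_state :: "'u set \<Rightarrow> (('u \<Rightarrow> 'u \<Rightarrow> complex) \<Rightarrow> complex) \<Rightarrow> bool" where
  "normal_state I \<sigma> \<longleftrightarrow> (\<exists>v :: nat \<Rightarrow> 'u \<Rightarrow> complex.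
      (\<forall>n. l2 I (v n)) \<and> (\<lambda>n. (vnorm (v n))^2) sums 1 \<and>
      (\<forall>T. bop I I T \<longrightarrow> (\<lambda>n. vinner (mapply T (v n)) (v n)) sums \<sigma> T))"

text \<open>The channel Gamma_{U,sigma}: M_X \<rightarrow> M_A (extended linearly from matrix units).\<close>
definition GammaU :: "('a::finite \<Rightarrow> 'x::finite \<Rightarrow> 'u \<Rightarrow> 'u \<Rightarrow> complex) \<Rightarrow> (('u \<Rightarrow> 'u \<Rightarrow> complex) \<Rightarrow> complex)
     \<Rightarrow> ('x \<Rightarrow> 'x \<Rightarrow> complex) \<Rightarrow> ('a \<Rightarrow> 'a \<Rightarrow> complex)" where
  "GammaU U \<sigma> m = (\<lambda>a a'. \<Sum>x\<in>UNIV. \<Sum>x'\<in>UNIV. m x x' * \<sigma> (mmul (adj (U a x)) (U a' x')))"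

definition QC :: "('u set \<times> 'u set \<times> ('a::finite \<Rightarrow> 'x::finite \<Rightarrow> 'u \<Rightarrow> 'u \<Rightarrow> complex)) set
     \<Rightarrow> (('x \<Rightarrow> 'x \<Rightarrow> complex) \<Rightarrow> ('a \<Rightarrow> 'a \<Rightarrow> complex)) set" where
  "QC R = {GammaU U \<sigma> | I J U \<sigma>. (I, J, U) \<in> R \<and> normal_state I \<sigma>}"

definition tensor_id :: "(('x \<Rightarrow> 'x \<Rightarrow> complex) \<Rightarrow> ('a \<Rightarrow> 'a \<Rightarrow> complex)) \<Rightarrow> ('x \<times> 'r \<Rightarrow> 'x \<times> 'r \<Rightarrow> complex)
     \<Rightarrow> ('a \<times> 'r \<Rightarrow> 'a \<times> 'r \<Rightarrow> complex)" where
  "tensor_id \<Gamma> Y = (\<lambda>(a, r) (a', r'). \<Gamma> (\<lambda>x x'. Y (x, r) (x', r')) a a')"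

definition omegaR :: "('u set \<times> 'u set \<times> ('a::finite \<Rightarrow> 'x::finite \<Rightarrow> 'u \<Rightarrow> 'u \<Rightarrow> complex)) set
     \<Rightarrow> ('x \<times> 'r \<Rightarrow> complex) \<Rightarrow> ('a \<times> 'r \<Rightarrow> 'a \<times> 'r \<Rightarrow> complex) \<Rightarrow> real" where
  "omegaR R \<xi> P = Sup {Re (mtrace (mmul (tensor_id \<Gamma> (rank1 \<xi> \<xi>)) P)) | \<Gamma>. \<Gamma> \<in> QC R}"

text \<open>Matrix norm on M_n(O^R_{X,A}): u = (u k l)_{k,l<n}, norm = sup over U of the norm of
  phi_U^(n)(u) as an operator l2({..<n} \<times> I) \<rightarrow> l2({..<n} \<times> J).\<close>
definition ampl :: "('a::finite \<Rightarrow> 'x::finite \<Rightarrow> 'u \<Rightarrow> 'u \<Rightarrow> complex) \<Rightarrow> nat \<Rightarrow> (nat \<Rightarrow> nat \<Rightarrow> ('x \<Rightarrow> 'a \<Rightarrow> complex))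
     \<Rightarrow> (nat \<times> 'u \<Rightarrow> nat \<times> 'u \<Rightarrow> complex)" where
  "ampl U n u = (\<lambda>(k, j) (l, i). if k < n \<and> l < n then phiU U (u k l) j i else 0)"

definition Mn_norm :: "('u set \<times> 'u set \<times> ('a::finite \<Rightarrow> 'x::finite \<Rightarrow> 'u \<Rightarrow> 'u \<Rightarrow> complex)) set
     \<Rightarrow> nat \<Rightarrow> (nat \<Rightarrow> nat \<Rightarrow> ('x \<Rightarrow> 'a \<Rightarrow> complex)) \<Rightarrow> real" where
  "Mn_norm R n u = (SUP t\<in>R. (case t of (I, J, U) \<Rightarrow> opnorm ({..<n} \<times> I) (ampl U n u)))"

text \<open>M_{N,1} norm of the column [rho_0,...,rho_{N-1}] (embedded as first column of M_N),
  and the M_{infinity,1} norm as the supremum over N.\<close>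
definition MN1_norm :: "('u set \<times> 'u set \<times> ('a::finite \<Rightarrow> 'x::finite \<Rightarrow> 'u \<Rightarrow> 'u \<Rightarrow> complex)) set
     \<Rightarrow> (nat \<Rightarrow> ('x \<Rightarrow> 'a \<Rightarrow> complex)) \<Rightarrow> nat \<Rightarrow> real" where
  "MN1_norm R \<rho> N = Mn_norm R N (\<lambda>k l. if l = 0 then \<rho> k else (\<lambda>_ _. 0))"

definition Minf1_norm :: "('u set \<times> 'u set \<times> ('a::finite \<Rightarrow> 'x::finite \<Rightarrow> 'u \<Rightarrow> 'u \<Rightarrow> complex)) set
     \<Rightarrow> (nat \<Rightarrow> ('x \<Rightarrow> 'a \<Rightarrow> complex)) \<Rightarrow> real" where
  "Minf1_norm R \<rho> = (SUP N. MN1_norm R \<rho> N)"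

text \<open>Spectral decomposition P = sum_{n \<in> N} lam_n gamma_n gamma_n^* (strong convergence),
  (gamma_n)_{n \<in> N} orthonormal, N \<subseteq> nat countable index set; terms off N are zero.\<close>
definition spectral_decomp :: "('i \<Rightarrow> 'i \<Rightarrow> complex) \<Rightarrow> nat set \<Rightarrow> (nat \<Rightarrow> real) \<Rightarrow> (nat \<Rightarrow> 'i \<Rightarrow> complex) \<Rightarrow> bool" where
  "spectral_decomp P Nidx lam \<gamma> \<longleftrightarrow>
     (\<forall>n\<in>Nidx. l2 UNIV (\<gamma> n) \<and> vnorm (\<gamma> n) = 1) \<and>
     (\<forall>m\<in>Nidx. \<forall>n\<in>Nidx. m \<noteq> n \<longrightarrow> vinner (\<gamma> m) (\<gamma> n) = 0) \<and>
     (\<forall>n. n \<notin> Nidx \<longrightarrow> lam n = 0 \<and> \<gamma> n = (\<lambda>_. 0)) \<and>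
     (\<forall>f. l2 UNIV f \<longrightarrow>
        (\<lambda>N. vnorm (\<lambda>i. mapply P f i - (\<Sum>n<N. complex_of_real (lam n) * vinner f (\<gamma> n) * \<gamma> n i)))
          \<longlonglongrightarrow> 0)"

definition rho :: "('x \<times> 'r \<Rightarrow> complex) \<Rightarrow> (nat \<Rightarrow> real) \<Rightarrow> (nat \<Rightarrow> 'a \<times> 'r \<Rightarrow> complex) \<Rightarrow> nat \<Rightarrow> ('x \<Rightarrow> 'a \<Rightarrow> complex)" where
  "rho \<xi> lam \<gamma> n = (\<lambda>x a. complex_of_real (sqrt (lam n)) * cnj (ptraceR (rank1 \<xi> (\<gamma> n)) x a))"

end

theory Submission
  imports Defs
begin

lemma CS_abs:
  fixes a b :: "'i \<Rightarrow> real"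
  assumes a2: "(\<lambda>i. (a i)^2) summable_on A" and b2: "(\<lambda>i. (b i)^2) summable_on A"
  shows "(\<lambda>i. \<bar>a i * b i\<bar>) summable_on A"
    and "(\<lambda>i. a i * b i) summable_on A"
    and "infsum (\<lambda>i. \<bar>a i * b i\<bar>) A \<le> sqrt (infsum (\<lambda>i. (a i)^2) A) * sqrt (infsum (\<lambda>i. (b i)^2) A)"
proof -
  have s: "(\<lambda>i. ((a i)^2 + (b i)^2) / 2) summable_on A"
    using summable_on_cmult_left[OF summable_on_add[OF a2 b2], of "1/2"] by simp
  show abs: "(\<lambda>i. \<bar>a i * b i\<bar>) summable_on A"
  proof (rule summable_on_comparison_test[OF s])
    fix i show "\<bar>a i * b i\<bar> \<le> ((a i)^2 + (b i)^2) / 2"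
    proof -
      have "0 \<le> (\<bar>a i\<bar> - \<bar>b i\<bar>)^2" by simp
      thus ?thesis by (simp add: power2_eq_square algebra_simps abs_mult)
    qed
  qed auto
  then show "(\<lambda>i. a i * b i) summable_on A"
    using summable_on_iff_abs_summable_on_real[of "\<lambda>i. a i * b i" A] by (simp add: abs_mult)
  show "infsum (\<lambda>i. \<bar>a i * b i\<bar>) A \<le> sqrt (infsum (\<lambda>i. (a i)^2) A) * sqrt (infsum (\<lambda>i. (b i)^2) A)"
  proof (rule infsum_le_finite_sums[OF abs])
    fix F assume F: "finite F" "F \<subseteq> A"
    have "(\<Sum>i\<in>F. \<bar>a i\<bar> * \<bar>b i\<bar>)^2 \<le> (\<Sum>i\<in>F. (a i)\<^sup>2) * (\<Sum>i\<in>F. (b i)\<^sup>2)"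
      using Cauchy_Schwarz_ineq_sum[of "\<lambda>i. \<bar>a i\<bar>" "\<lambda>i. \<bar>b i\<bar>" F] by simp
    hence "(\<Sum>i\<in>F. \<bar>a i\<bar> * \<bar>b i\<bar>) \<le> sqrt (\<Sum>i\<in>F. (a i)\<^sup>2) * sqrt (\<Sum>i\<in>F. (b i)\<^sup>2)"
      by (subst real_sqrt_mult[symmetric], rule real_le_rsqrt)
    also have "\<dots> \<le> sqrt (infsum (\<lambda>i. (a i)^2) A) * sqrt (infsum (\<lambda>i. (b i)^2) A)"
      by (intro mult_mono real_sqrt_le_mono finite_sum_le_infsum a2 b2 F) (auto intro!: infsum_nonneg sum_nonneg)
    finally show "(\<Sum>i\<in>F. \<bar>a i * b i\<bar>) \<le> sqrt (infsum (\<lambda>i. (a i)^2) A) * sqrt (infsum (\<lambda>i. (b i)^2) A)"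
      by (simp add: abs_mult)
  qed
qed

lemma has_sum_diff':
  fixes f g :: "'i \<Rightarrow> 'b::{topological_ab_group_add}"
  assumes "(f has_sum a) A" "(g has_sum b) A"
  shows "((\<lambda>x. f x - g x) has_sum (a - b)) A"
proof -
  have "((\<lambda>x. - g x) has_sum (-b)) A" using has_sum_uminus[of g A "-b"] assms(2) by simp
  from has_sum_add[OF assms(1) this] show ?thesis by simp
qed

lemma summable_on_diff':
  fixes f g :: "'i \<Rightarrow> 'b::{topological_ab_group_add}"
  assumes "f summable_on A" "g summable_on A"
  shows "(\<lambda>x. f x - g x) summable_on A"
  using assms has_sum_diff' unfolding summable_on_def by blast

lemma infsum_diff':
  fixes f g :: "'i \<Rightarrow> 'b::{topological_ab_group_add,t2_space}"
  assumes "f summable_on A" "g summable_on A"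
  shows "infsum (\<lambda>x. f x - g x) A = infsum f A - infsum g A"
  using has_sum_diff'[OF has_sum_infsum[OF assms(1)] has_sum_infsum[OF assms(2)]] infsumI by blast

lemma l2_summable: "l2 I f \<Longrightarrow> (\<lambda>i. (cmod (f i))^2) summable_on UNIV"
  by (simp add: l2_def)

lemma l2_out: "l2 I f \<Longrightarrow> i \<notin> I \<Longrightarrow> f i = 0"
  by (simp add: l2_def)

lemma vnorm_nonneg: "vnorm f \<ge> 0"
proof -
  have "0 \<le> infsum (\<lambda>i. (cmod (f i))^2) UNIV" by (rule infsum_nonneg) simp
  thus ?thesis unfolding vnorm_def by simp
qed

lemma vnorm_sq: "(vnorm f)^2 = infsum (\<lambda>i. (cmod (f i))^2) UNIV"
proof -
  have "0 \<le> infsum (\<lambda>i. (cmod (f i))^2) UNIV" by (rule infsum_nonneg) simp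
  thus ?thesis unfolding vnorm_def by simp
qed

lemma complex_CS:
  fixes f g :: "'i \<Rightarrow> complex"
  assumes f2: "(\<lambda>i. (cmod (f i))^2) summable_on A" and g2: "(\<lambda>i. (cmod (g i))^2) summable_on A"
  shows "(\<lambda>i. f i * g i) summable_on A"
    and "(\<lambda>i. cmod (f i * g i)) summable_on A"
    and "cmod (infsum (\<lambda>i. f i * g i) A) \<le> sqrt (infsum (\<lambda>i. (cmod (f i))^2) A) * sqrt (infsum (\<lambda>i. (cmod (g i))^2) A)"
proof -
  note c = CS_abs[of "\<lambda>i. cmod (f i)" A "\<lambda>i. cmod (g i)", OF f2 g2]
  show a: "(\<lambda>i. cmod (f i * g i)) summable_on A" using c(1) by (simp add: norm_mult)
  then show s: "(\<lambda>i. f i * g i) summable_on A"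
    using summable_on_iff_abs_summable_on_complex by blast
  have "cmod (infsum (\<lambda>i. f i * g i) A) \<le> infsum (\<lambda>i. cmod (f i * g i)) A"
    by (rule norm_infsum_bound) (use a in simp)
  also have "\<dots> \<le> sqrt (infsum (\<lambda>i. (cmod (f i))^2) A) * sqrt (infsum (\<lambda>i. (cmod (g i))^2) A)"
    using c(3) by (simp add: norm_mult)
  finally show "cmod (infsum (\<lambda>i. f i * g i) A) \<le> sqrt (infsum (\<lambda>i. (cmod (f i))^2) A) * sqrt (infsum (\<lambda>i. (cmod (g i))^2) A)" .
qed

lemma l2_prod_summable:
  assumes "l2 I f" "l2 J g"
  shows "(\<lambda>i. f i * g i) summable_on UNIV"
  using complex_CS(1)[OF l2_summable[OF assms(1)] l2_summable[OF assms(2)]] .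

lemma l2_cnj: "l2 I g \<Longrightarrow> l2 I (\<lambda>i. cnj (g i))"
  by (simp add: l2_def)

lemma vinner_summable:
  assumes "l2 I f" "l2 J g"
  shows "(\<lambda>i. f i * cnj (g i)) summable_on UNIV"
  using l2_prod_summable[OF assms(1) l2_cnj[OF assms(2)]] .

lemma vinner_CS:
  assumes "l2 I f" "l2 J g"
  shows "cmod (vinner f g) \<le> vnorm f * vnorm g"
  using complex_CS(3)[OF l2_summable[OF assms(1)] l2_summable[OF l2_cnj[OF assms(2)]]]
  unfolding vinner_def vnorm_def by simp

lemma vinner_self: "l2 I f \<Longrightarrow> vinner f f = complex_of_real ((vnorm f)^2)"
proof -
  assume f: "l2 I f"
  have "vinner f f = infsum (\<lambda>i. complex_of_real ((cmod (f i))^2)) UNIV"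
    unfolding vinner_def by (rule infsum_cong) (simp only: complex_norm_square)
  also have "\<dots> = complex_of_real (infsum (\<lambda>i. (cmod (f i))^2) UNIV)"
    using has_sum_of_real[OF has_sum_infsum[OF l2_summable[OF f]], where 'a=complex] infsumI by blast
  finally show ?thesis by (simp add: vnorm_sq)
qed

lemma l2_add:
  assumes "l2 I f" "l2 I g"
  shows "l2 I (\<lambda>i. f i + g i)"
proof -
  have s: "(\<lambda>i. 2 * (cmod (f i))^2 + 2 * (cmod (g i))^2) summable_on UNIV"
    by (intro summable_on_add summable_on_cmult_right l2_summable[OF assms(1)] l2_summable[OF assms(2)])
  have "(\<lambda>i. (cmod (f i + g i))^2) summable_on UNIV"
  proof (rule summable_on_comparison_test[OF s])
    fix i
    have "cmod (f i + g i) \<le> cmod (f i) + cmod (g i)" by (rule norm_triangle_ineq)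
    hence "(cmod (f i + g i))^2 \<le> (cmod (f i) + cmod (g i))^2" by (simp add: power_mono)
    also have "\<dots> \<le> 2 * (cmod (f i))^2 + 2 * (cmod (g i))^2"
    proof -
      have "0 \<le> (cmod (f i) - cmod (g i))^2" by simp
      thus ?thesis by (simp add: power2_eq_square algebra_simps)
    qed
    finally show "(cmod (f i + g i))^2 \<le> 2 * (cmod (f i))^2 + 2 * (cmod (g i))^2" .
  qed auto
  thus ?thesis using assms by (simp add: l2_def)
qed

lemma l2_scale: "l2 I f \<Longrightarrow> l2 I (\<lambda>i. c * f i)"
  unfolding l2_def by (auto simp: norm_mult power_mult_distrib intro: summable_on_cmult_right)

lemma l2_uminus: "l2 I f \<Longrightarrow> l2 I (\<lambda>i. - f i)"
  by (simp add: l2_def)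

lemma l2_diff: "l2 I f \<Longrightarrow> l2 I g \<Longrightarrow> l2 I (\<lambda>i. f i - g i)"
  using l2_add[of I f "\<lambda>i. - g i"] l2_uminus by auto

lemma l2_zero: "l2 I (\<lambda>_. 0)"
  by (simp add: l2_def)

lemma l2_sum: "finite S \<Longrightarrow> (\<And>n. n \<in> S \<Longrightarrow> l2 I (F n)) \<Longrightarrow> l2 I (\<lambda>i. \<Sum>n\<in>S. F n i)"
proof (induction S rule: finite_induct)
  case empty then show ?case by (simp add: l2_zero)
next
  case (insert x S) then show ?case by (simp add: l2_add)
qed

lemma l2_mono: "l2 I f \<Longrightarrow> I \<subseteq> I' \<Longrightarrow> l2 I' f"
  unfolding l2_def by blast

lemma l2_restrict: "l2 I f \<Longrightarrow> l2 (I \<inter> F) (\<lambda>i. if i \<in> F then f i else 0)"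
  unfolding l2_def
  by (auto intro: summable_on_comparison_test[of "\<lambda>i. (cmod (f i))^2"])

lemma l2_restrict': "l2 I f \<Longrightarrow> l2 I (\<lambda>i. if i \<in> F then f i else 0)"
  using l2_restrict l2_mono by (metis inf_le1)

lemma vinner_add1:
  assumes "l2 I f" "l2 I g" "l2 J h"
  shows "vinner (\<lambda>i. f i + g i) h = vinner f h + vinner g h"
  unfolding vinner_def
  using infsum_add[OF vinner_summable[OF assms(1,3)] vinner_summable[OF assms(2,3)]]
  by (simp add: distrib_right)

lemma vinner_diff1:
  assumes "l2 I f" "l2 I g" "l2 J h"
  shows "vinner (\<lambda>i. f i - g i) h = vinner f h - vinner g h"
  unfolding vinner_def
  using infsum_diff'[OF vinner_summable[OF assms(1,3)] vinner_summable[OF assms(2,3)]]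
  by (simp add: left_diff_distrib)

lemma vinner_scale1: "vinner (\<lambda>i. c * f i) h = c * vinner f h"
  unfolding vinner_def by (simp add: infsum_cmult_right' mult.assoc)

lemma vinner_scale2: "vinner f (\<lambda>i. c * h i) = cnj c * vinner f h"
  unfolding vinner_def by (simp add: infsum_cmult_right' mult_ac)

lemma vinner_cnj: "vinner g f = cnj (vinner f g)"
  unfolding vinner_def infsum_cnj[symmetric] by (simp add: mult.commute)

lemma vinner_sum1:
  assumes "finite S" "\<And>n. n \<in> S \<Longrightarrow> l2 I (F n)" "l2 J h"
  shows "vinner (\<lambda>i. \<Sum>n\<in>S. F n i) h = (\<Sum>n\<in>S. vinner (F n) h)"
  using assms
proof (induction S rule: finite_induct)
  case empty then show ?case by (simp add: vinner_def)
next
  case (insert x S)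
  have "vinner (\<lambda>i. \<Sum>n\<in>insert x S. F n i) h = vinner (\<lambda>i. F x i + (\<Sum>n\<in>S. F n i)) h"
    using insert by simp
  also have "\<dots> = vinner (F x) h + vinner (\<lambda>i. \<Sum>n\<in>S. F n i) h"
    by (rule vinner_add1) (use insert in \<open>auto intro!: l2_sum\<close>)
  finally show ?case using insert by simp
qed

lemma vnorm_scale: "vnorm (\<lambda>i. c * f i) = cmod c * vnorm f"
proof -
  have "(vnorm (\<lambda>i. c * f i))^2 = (cmod c)^2 * (vnorm f)^2"
    by (simp add: vnorm_sq norm_mult power_mult_distrib infsum_cmult_right')
  hence "(vnorm (\<lambda>i. c * f i))^2 = (cmod c * vnorm f)^2" by (simp add: power_mult_distrib)
  thus ?thesis by (rule power2_eq_imp_eq) (auto simp: vnorm_nonneg)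
qed

lemma vnorm_zero_imp:
  assumes "l2 I f" "vnorm f = 0" shows "f = (\<lambda>_. 0)"
proof
  fix i
  have "infsum (\<lambda>i. (cmod (f i))^2) UNIV = 0" using assms(2) vnorm_sq[of f] by simp
  hence "(cmod (f i))^2 = 0"
    using nonneg_infsum_le_0D[of "\<lambda>i. (cmod (f i))^2" UNIV i] l2_summable[OF assms(1)] by auto
  thus "f i = 0" by simp
qed

lemma infsum_restrict_finite:
  fixes g :: "'i \<Rightarrow> 'b::{comm_monoid_add,t2_space,topological_space}"
  assumes "finite F"
  shows "infsum (\<lambda>j. if j \<in> F then g j else 0) UNIV = sum g F"
proof -
  have "infsum (\<lambda>j. if j \<in> F then g j else 0) UNIV = infsum g F"
    by (rule infsum_cong_neutral) auto
  thus ?thesis using assms by simp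
qed

lemma bop_zero: "bop J I M \<Longrightarrow> i \<notin> I \<or> j \<notin> J \<Longrightarrow> M i j = 0"
  unfolding bop_def by blast

lemma bop_boundE:
  assumes "bop J I M"
  obtains C where "C \<ge> 0" "\<And>f. l2 J f \<Longrightarrow> (\<forall>i. (\<lambda>j. M i j * f j) summable_on UNIV) \<and>
      l2 I (mapply M f) \<and> vnorm (mapply M f) \<le> C * vnorm f"
proof -
  from assms obtain C where C: "\<And>f. l2 J f \<Longrightarrow> (\<forall>i. (\<lambda>j. M i j * f j) summable_on UNIV) \<and>
      l2 I (mapply M f) \<and> vnorm (mapply M f) \<le> C * vnorm f" unfolding bop_def by blast
  show ?thesis
  proof (rule that[of "max C 0"])
    fix f assume f: "l2 J f"
    have "C * vnorm f \<le> max C 0 * vnorm f" by (intro mult_right_mono vnorm_nonneg) auto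
    thus "(\<forall>i. (\<lambda>j. M i j * f j) summable_on UNIV) \<and> l2 I (mapply M f) \<and> vnorm (mapply M f) \<le> max C 0 * vnorm f"
      using C[OF f] by auto
  qed auto
qed

lemma bop_l2: "bop J I M \<Longrightarrow> l2 J f \<Longrightarrow> l2 I (mapply M f)"
  by (metis bop_boundE)

lemma bop_row: "bop J I M \<Longrightarrow> l2 J f \<Longrightarrow> (\<lambda>j. M i j * f j) summable_on UNIV"
  by (metis bop_boundE)

definition evec :: "'j \<Rightarrow> 'j \<Rightarrow> complex" where
  "evec j = (\<lambda>k. if k = j then 1 else 0)"

lemma l2_evec: "j \<in> J \<Longrightarrow> l2 J (evec j)"
proof -
  assume j: "j \<in> J"
  have "(\<lambda>i. (cmod (evec j i))^2) summable_on UNIV"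
    by (rule summable_on_cong_neutral[where S="{j}", THEN iffD1]) (auto simp: evec_def)
  thus ?thesis using j unfolding l2_def evec_def by auto
qed

lemma vnorm_evec: "vnorm (evec j) = 1"
proof -
  have "infsum (\<lambda>i. (cmod (evec j i))^2) UNIV = infsum (\<lambda>i. 1::real) {j}"
    by (rule infsum_cong_neutral) (auto simp: evec_def)
  thus ?thesis unfolding vnorm_def by simp
qed

lemma mapply_finite_support:
  assumes "finite F"
  shows "mapply M (\<lambda>j. if j \<in> F then v j else 0) = (\<lambda>i. \<Sum>j\<in>F. v j * M i j)"
  unfolding mapply_def
proof
  fix i
  have "infsum (\<lambda>j. M i j * (if j \<in> F then v j else 0)) UNIV = infsum (\<lambda>j. if j \<in> F then v j * M i j else 0) UNIV"
    by (rule infsum_cong) (auto simp: mult.commute)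
  also have "\<dots> = (\<Sum>j\<in>F. v j * M i j)" by (rule infsum_restrict_finite[OF assms])
  finally show "infsum (\<lambda>j. M i j * (if j \<in> F then v j else 0)) UNIV = (\<Sum>j\<in>F. v j * M i j)" .
qed

lemma mapply_evec: "mapply M (evec j) = (\<lambda>i. M i j)"
  using mapply_finite_support[of "{j}" M "\<lambda>_. 1"] unfolding evec_def by (simp add: if_distrib cong: if_cong)

lemma bop_col:
  assumes "bop J I M"
  obtains C where "C \<ge> 0" "\<And>j. l2 I (\<lambda>i. M i j) \<and> vnorm (\<lambda>i. M i j) \<le> C"
proof -
  obtain C where C: "C \<ge> 0" "\<And>f. l2 J f \<Longrightarrow> (\<forall>i. (\<lambda>j. M i j * f j) summable_on UNIV) \<and>
      l2 I (mapply M f) \<and> vnorm (mapply M f) \<le> C * vnorm f" using bop_boundE[OF assms] by blast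
  show ?thesis
  proof (rule that[OF C(1)])
    fix j
    show "l2 I (\<lambda>i. M i j) \<and> vnorm (\<lambda>i. M i j) \<le> C"
    proof (cases "j \<in> J")
      case True
      then show ?thesis using C(2)[OF l2_evec[OF True]] by (simp add: mapply_evec vnorm_evec)
    next
      case False
      hence "(\<lambda>i. M i j) = (\<lambda>_. 0)" using bop_zero[OF assms] by auto
      then show ?thesis using C(1) by (simp add: l2_zero vnorm_def)
    qed
  qed
qed

lemma bop_col_l2: "bop J I M \<Longrightarrow> l2 I (\<lambda>i. M i j)"
  by (metis bop_col)

lemma mapply_diff:
  assumes "bop J I M" "l2 J f" "l2 J g"
  shows "mapply M (\<lambda>j. f j - g j) = (\<lambda>i. mapply M f i - mapply M g i)"
  unfolding mapply_def
  using infsum_diff'[OF bop_row[OF assms(1,2)] bop_row[OF assms(1,3)]]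
  by (simp add: right_diff_distrib)

lemma tail_tendsto:
  assumes "l2 J v"
  shows "((\<lambda>F. vnorm (\<lambda>j. if j \<in> F then 0 else v j)) \<longlongrightarrow> 0) (finite_subsets_at_top UNIV)"
proof -
  let ?g = "\<lambda>j. (cmod (v j))^2"
  let ?S = "infsum ?g UNIV"
  have hs: "(?g has_sum ?S) UNIV" using l2_summable[OF assms] by simp
  hence t: "((\<lambda>F. sum ?g F) \<longlongrightarrow> ?S) (finite_subsets_at_top UNIV)" unfolding has_sum_def .
  have ev: "eventually (\<lambda>F. vnorm (\<lambda>j. if j \<in> F then 0 else v j) = sqrt (?S - sum ?g F)) (finite_subsets_at_top UNIV)"
  proof (rule eventually_finite_subsets_at_top_weakI)
    fix F :: "'a set" assume F: "finite F"
    have "infsum (\<lambda>j. (cmod (if j \<in> F then 0 else v j))^2) UNIV = infsum (\<lambda>j. ?g j - (if j \<in> F then ?g j else 0)) UNIV"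
      by (rule infsum_cong) auto
    also have "\<dots> = ?S - infsum (\<lambda>j. if j \<in> F then ?g j else 0) UNIV"
      by (rule infsum_diff'[OF l2_summable[OF assms]]) (rule summable_on_cong_neutral[where S=F, THEN iffD1], use F in auto)
    also have "\<dots> = ?S - sum ?g F" using infsum_restrict_finite[OF F] by simp
    finally show "vnorm (\<lambda>j. if j \<in> F then 0 else v j) = sqrt (?S - sum ?g F)" unfolding vnorm_def by simp
  qed
  have "((\<lambda>F. sqrt (?S - sum ?g F)) \<longlongrightarrow> sqrt (?S - ?S)) (finite_subsets_at_top UNIV)"
    by (intro tendsto_real_sqrt tendsto_diff tendsto_const t)
  hence "((\<lambda>F. sqrt (?S - sum ?g F)) \<longlongrightarrow> 0) (finite_subsets_at_top UNIV)" by simp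
  thus ?thesis using tendsto_cong[OF ev] by simp
qed

lemma key_L:
  assumes A: "bop J I A" and v: "l2 J v" and w: "l2 K w"
  shows "((\<lambda>j. v j * vinner (\<lambda>i. A i j) w) has_sum vinner (mapply A v) w) UNIV"
proof -
  obtain C where C: "C \<ge> 0" "\<And>f. l2 J f \<Longrightarrow> (\<forall>i. (\<lambda>j. A i j * f j) summable_on UNIV) \<and>
      l2 I (mapply A f) \<and> vnorm (mapply A f) \<le> C * vnorm f" using bop_boundE[OF A] by blast
  define vF where "vF F = (\<lambda>j. if j \<in> F then v j else 0)" for F
  define tl where "tl F = (\<lambda>j. if j \<in> F then 0 else v j)" for F
  have vF: "l2 J (vF F)" for F unfolding vF_def by (rule l2_restrict'[OF v])
  have vtl: "(\<lambda>j. v j - vF F j) = tl F" for F unfolding vF_def tl_def by auto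
  have ev: "eventually (\<lambda>F. (\<Sum>j\<in>F. v j * vinner (\<lambda>i. A i j) w) = vinner (mapply A (vF F)) w) (finite_subsets_at_top UNIV)"
  proof (rule eventually_finite_subsets_at_top_weakI)
    fix F :: "'a set" assume F: "finite F"
    have "vinner (mapply A (vF F)) w = vinner (\<lambda>i. \<Sum>j\<in>F. v j * A i j) w"
      unfolding vF_def mapply_finite_support[OF F] ..
    also have "\<dots> = (\<Sum>j\<in>F. vinner (\<lambda>i. v j * A i j) w)"
      by (rule vinner_sum1[OF F _ w]) (rule l2_scale[OF bop_col_l2[OF A]])
    also have "\<dots> = (\<Sum>j\<in>F. v j * vinner (\<lambda>i. A i j) w)" by (simp add: vinner_scale1)
    finally show "(\<Sum>j\<in>F. v j * vinner (\<lambda>i. A i j) w) = vinner (mapply A (vF F)) w" ..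
  qed
  have bound: "cmod (vinner (mapply A (vF F)) w - vinner (mapply A v) w) \<le> C * vnorm (tl F) * vnorm w" for F
  proof -
    have "vinner (mapply A v) w - vinner (mapply A (vF F)) w = vinner (\<lambda>i. mapply A v i - mapply A (vF F) i) w"
      by (rule vinner_diff1[symmetric, OF bop_l2[OF A v] bop_l2[OF A vF] w])
    also have "\<dots> = vinner (mapply A (tl F)) w"
      using mapply_diff[OF A v vF, of F] vtl[of F] by simp
    finally have eq: "vinner (mapply A (vF F)) w - vinner (mapply A v) w = - vinner (mapply A (tl F)) w"
      by (simp add: algebra_simps)
    have tl2: "l2 J (tl F)" using vtl[of F] l2_diff[OF v vF] by metis
    have "cmod (vinner (mapply A (tl F)) w) \<le> vnorm (mapply A (tl F)) * vnorm w"
      by (rule vinner_CS[OF bop_l2[OF A tl2] w])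
    also have "\<dots> \<le> C * vnorm (tl F) * vnorm w"
      by (intro mult_right_mono vnorm_nonneg) (use C(2)[OF tl2] in auto)
    finally show ?thesis using eq by simp
  qed
  have "((\<lambda>F. C * vnorm (tl F) * vnorm w) \<longlongrightarrow> C * 0 * vnorm w) (finite_subsets_at_top UNIV)"
    by (intro tendsto_mult tendsto_const) (unfold tl_def, rule tail_tendsto[OF v])
  hence t0: "((\<lambda>F. C * vnorm (tl F) * vnorm w) \<longlongrightarrow> 0) (finite_subsets_at_top UNIV)" by simp
  have "((\<lambda>F. vinner (mapply A (vF F)) w - vinner (mapply A v) w) \<longlongrightarrow> 0) (finite_subsets_at_top UNIV)"
    by (rule Lim_null_comparison[OF always_eventually t0]) (intro allI bound)
  hence "((\<lambda>F. vinner (mapply A (vF F)) w) \<longlongrightarrow> vinner (mapply A v) w) (finite_subsets_at_top UNIV)"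
    using Lim_null by blast
  thus ?thesis unfolding has_sum_def by (subst tendsto_cong[OF ev])
qed

definition adjv :: "('i \<Rightarrow> 'j \<Rightarrow> complex) \<Rightarrow> ('i \<Rightarrow> complex) \<Rightarrow> 'j \<Rightarrow> complex" where
  "adjv A g = (\<lambda>j. vinner g (\<lambda>i. A i j))"

lemma cnj_vinner: "cnj (vinner f g) = vinner g f"
  by (simp add: vinner_cnj[of g f])

lemma vinner_zero2: "vinner g (\<lambda>_. 0) = 0"
  by (simp add: vinner_def)

lemma vinner_zero1: "vinner (\<lambda>_. 0) g = 0"
  by (simp add: vinner_def)

lemma adjv_bound:
  assumes A: "bop J I A"
  obtains C where "C \<ge> 0" "\<And>g. l2 K g \<Longrightarrow> l2 J (adjv A g) \<and> vnorm (adjv A g) \<le> C * vnorm g"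
proof -
  obtain C where C: "C \<ge> 0" "\<And>f. l2 J f \<Longrightarrow> (\<forall>i. (\<lambda>j. A i j * f j) summable_on UNIV) \<and>
      l2 I (mapply A f) \<and> vnorm (mapply A f) \<le> C * vnorm f" using bop_boundE[OF A] by blast
  show ?thesis
  proof (rule that[OF C(1)])
    fix g assume g: "l2 K g"
    let ?a = "adjv A g"
    have out: "?a j = 0" if "j \<notin> J" for j
    proof -
      have "(\<lambda>i. A i j) = (\<lambda>_. 0)" using bop_zero[OF A] that by auto
      thus ?thesis unfolding adjv_def by (simp add: vinner_zero2)
    qed
    have SF: "(\<Sum>j\<in>F. (cmod (?a j))^2) \<le> (C * vnorm g)^2" if F: "finite F" for F
    proof -
      define c where "c = (\<lambda>j. if j \<in> F then ?a j else 0)"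
      have csum: "(\<lambda>j. (cmod (c j))^2) summable_on UNIV"
        unfolding c_def by (rule summable_on_cong_neutral[where S=F, THEN iffD1]) (use F in auto)
      have c2: "l2 J c"
        unfolding l2_def using csum out by (auto simp: c_def)
      define S where "S = (\<Sum>j\<in>F. (cmod (?a j))^2)"
      have S0: "S \<ge> 0" unfolding S_def by (simp add: sum_nonneg)
      have "vinner (mapply A c) g = vinner (\<lambda>i. \<Sum>j\<in>F. ?a j * A i j) g"
        unfolding c_def mapply_finite_support[OF F] ..
      also have "\<dots> = (\<Sum>j\<in>F. vinner (\<lambda>i. ?a j * A i j) g)"
        by (rule vinner_sum1[OF F _ g]) (rule l2_scale[OF bop_col_l2[OF A]])
      also have "\<dots> = (\<Sum>j\<in>F. ?a j * cnj (?a j))"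
        by (simp add: vinner_scale1 adjv_def cnj_vinner)
      also have "\<dots> = complex_of_real S"
        unfolding S_def of_real_sum by (rule sum.cong[OF refl]) (simp only: complex_norm_square)
      finally have eq: "vinner (mapply A c) g = complex_of_real S" .
      have nc: "vnorm c = sqrt S"
      proof -
        have "infsum (\<lambda>j. (cmod (c j))^2) UNIV = infsum (\<lambda>j. if j \<in> F then (cmod (?a j))^2 else 0) UNIV"
          unfolding c_def by (rule infsum_cong) auto
        thus ?thesis unfolding vnorm_def S_def using infsum_restrict_finite[OF F] by simp
      qed
      have "S = cmod (vinner (mapply A c) g)" using eq S0 by simp
      also have "\<dots> \<le> vnorm (mapply A c) * vnorm g" by (rule vinner_CS[OF bop_l2[OF A c2] g])
      also have "\<dots> \<le> C * vnorm c * vnorm g"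
        by (intro mult_right_mono vnorm_nonneg) (use C(2)[OF c2] in auto)
      finally have le: "S \<le> sqrt S * (C * vnorm g)" using nc by (simp add: mult_ac)
      have "sqrt S \<le> C * vnorm g"
      proof (cases "S = 0")
        case True thus ?thesis using C(1) vnorm_nonneg[of g] by simp
      next
        case False
        hence "sqrt S > 0" using S0 by simp
        moreover have "sqrt S * sqrt S \<le> sqrt S * (C * vnorm g)" using le S0 by simp
        ultimately show ?thesis using mult_le_cancel_left_pos by blast
      qed
      hence "(sqrt S)^2 \<le> (C * vnorm g)^2" using S0 by (intro power_mono) auto
      thus ?thesis using S0 unfolding S_def by simp
    qed
    have summ: "(\<lambda>j. (cmod (?a j))^2) summable_on UNIV"
      by (rule nonneg_bounded_partial_sums_imp_summable_on[where C="(C * vnorm g)^2"])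
        (auto intro!: eventually_finite_subsets_at_top_weakI SF)
    have "infsum (\<lambda>j. (cmod (?a j))^2) UNIV \<le> (C * vnorm g)^2"
      by (rule infsum_le_finite_sums[OF summ]) (rule SF)
    hence "vnorm ?a \<le> sqrt ((C * vnorm g)^2)" unfolding vnorm_def by (rule real_sqrt_le_mono)
    also have "\<dots> = C * vnorm g" using C(1) vnorm_nonneg[of g] by simp
    finally show "l2 J ?a \<and> vnorm ?a \<le> C * vnorm g" using summ out unfolding l2_def by auto
  qed
qed

lemma adjv_l2: "bop J I A \<Longrightarrow> l2 K g \<Longrightarrow> l2 J (adjv A g)"
  by (metis adjv_bound)

lemma mmul_adj_entry: "mmul (adj A) B i i' = vinner (\<lambda>j. B j i') (\<lambda>j. A j i)"
  unfolding mmul_def adj_def vinner_def by (simp add: mult.commute)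

lemma mmul_adj_row:
  assumes A: "bop I J A" and B: "bop I J B" and f: "l2 I f"
  shows "((\<lambda>i'. mmul (adj A) B i i' * f i') has_sum adjv A (mapply B f) i) UNIV"
proof -
  have "((\<lambda>i'. f i' * vinner (\<lambda>j. B j i') (\<lambda>j. A j i)) has_sum vinner (mapply B f) (\<lambda>j. A j i)) UNIV"
    by (rule key_L[OF B f bop_col_l2[OF A]])
  thus ?thesis unfolding adjv_def by (simp add: mmul_adj_entry mult.commute)
qed

lemma mmul_adj_apply:
  assumes A: "bop I J A" and B: "bop I J B" and f: "l2 I f"
  shows "mapply (mmul (adj A) B) f = adjv A (mapply B f)"
proof
  fix i show "mapply (mmul (adj A) B) f i = adjv A (mapply B f) i"
    unfolding mapply_def[of "mmul (adj A) B"] by (rule infsumI[OF mmul_adj_row[OF assms]])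
qed

lemma bop_mmul_adj:
  assumes A: "bop I J A" and B: "bop I J B"
  shows "bop I I (mmul (adj A) B)"
proof -
  obtain CA where CA: "CA \<ge> 0" "\<And>g. l2 J g \<Longrightarrow> l2 I (adjv A g) \<and> vnorm (adjv A g) \<le> CA * vnorm g"
    using adjv_bound[OF A] by blast
  obtain CB where CB: "CB \<ge> 0" "\<And>f. l2 I f \<Longrightarrow> (\<forall>i. (\<lambda>j. B i j * f j) summable_on UNIV) \<and>
      l2 J (mapply B f) \<and> vnorm (mapply B f) \<le> CB * vnorm f" using bop_boundE[OF B] by blast
  have z: "mmul (adj A) B i i' = 0" if "i \<notin> I \<or> i' \<notin> I" for i i'
  proof -
    have h: "\<And>j. adj A i j * B j i' = 0" using that bop_zero[OF A] bop_zero[OF B] unfolding adj_def by auto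
    show ?thesis unfolding mmul_def h by simp
  qed
  have "(\<forall>i. (\<lambda>j. mmul (adj A) B i j * f j) summable_on UNIV) \<and>
              l2 I (mapply (mmul (adj A) B) f) \<and> vnorm (mapply (mmul (adj A) B) f) \<le> (CA * CB) * vnorm f"
    if f: "l2 I f" for f
  proof (intro conjI)
    show "\<forall>i. (\<lambda>j. mmul (adj A) B i j * f j) summable_on UNIV"
      using mmul_adj_row[OF A B f] summable_on_def by blast
    have Bf: "l2 J (mapply B f)" using CB(2)[OF f] by blast
    show "l2 I (mapply (mmul (adj A) B) f)" using mmul_adj_apply[OF A B f] CA(2)[OF Bf] by simp
    have "vnorm (mapply (mmul (adj A) B) f) \<le> CA * vnorm (mapply B f)"
      using mmul_adj_apply[OF A B f] CA(2)[OF Bf] by simp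
    also have "\<dots> \<le> CA * (CB * vnorm f)" using CB(2)[OF f] CA(1) by (intro mult_left_mono) auto
    finally show "vnorm (mapply (mmul (adj A) B) f) \<le> (CA * CB) * vnorm f" by (simp add: mult_ac)
  qed
  thus ?thesis unfolding bop_def using z by blast
qed

lemma vinner_mmul_adj:
  assumes A: "bop I J A" and B: "bop I J B" and v: "l2 I v"
  shows "vinner (mapply (mmul (adj A) B) v) v = vinner (mapply B v) (mapply A v)"
proof -
  have Bv: "l2 J (mapply B v)" by (rule bop_l2[OF B v])
  have "((\<lambda>i. v i * vinner (\<lambda>j. A j i) (mapply B v)) has_sum vinner (mapply A v) (mapply B v)) UNIV"
    by (rule key_L[OF A v Bv])
  hence "((\<lambda>i. cnj (v i * vinner (\<lambda>j. A j i) (mapply B v))) has_sum cnj (vinner (mapply A v) (mapply B v))) UNIV"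
    by (rule has_sum_cnj_iff[THEN iffD2])
  hence "((\<lambda>i. adjv A (mapply B v) i * cnj (v i)) has_sum vinner (mapply B v) (mapply A v)) UNIV"
    unfolding adjv_def by (simp add: cnj_vinner mult.commute)
  hence "vinner (adjv A (mapply B v)) v = vinner (mapply B v) (mapply A v)"
    unfolding vinner_def by (rule infsumI)
  thus ?thesis using mmul_adj_apply[OF A B v] by simp
qed

lemma has_sum_finsum:
  fixes f :: "'x \<Rightarrow> 'i \<Rightarrow> 'b::topological_comm_monoid_add"
  assumes "finite S" "\<And>x. x \<in> S \<Longrightarrow> (f x has_sum a x) B"
  shows "((\<lambda>i. \<Sum>x\<in>S. f x i) has_sum (\<Sum>x\<in>S. a x)) B"
  using assms
proof (induction S rule: finite_induct)
  case empty then show ?case by simp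
next
  case (insert y S)
  have "((\<lambda>i. f y i + (\<Sum>x\<in>S. f x i)) has_sum (a y + (\<Sum>x\<in>S. a x))) B"
    by (rule has_sum_add) (use insert in auto)
  then show ?case using insert by simp
qed

lemma infsum_finsum:
  fixes f :: "'x \<Rightarrow> 'i \<Rightarrow> 'b::{topological_comm_monoid_add,t2_space}"
  assumes "finite S" "\<And>x. x \<in> S \<Longrightarrow> f x summable_on B"
  shows "infsum (\<lambda>i. \<Sum>x\<in>S. f x i) B = (\<Sum>x\<in>S. infsum (f x) B)"
    and "(\<lambda>i. \<Sum>x\<in>S. f x i) summable_on B"
proof -
  have h: "((\<lambda>i. \<Sum>x\<in>S. f x i) has_sum (\<Sum>x\<in>S. infsum (f x) B)) B"
    by (rule has_sum_finsum[OF assms(1)]) (use assms(2) in auto)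
  thus "infsum (\<lambda>i. \<Sum>x\<in>S. f x i) B = (\<Sum>x\<in>S. infsum (f x) B)" by (rule infsumI)
  show "(\<lambda>i. \<Sum>x\<in>S. f x i) summable_on B" using h summable_on_def by blast
qed

lemma fin_sigma_c:
  fixes g :: "'x \<Rightarrow> 'i \<Rightarrow> complex"
  assumes A: "finite A" and s: "\<And>x. x \<in> A \<Longrightarrow> g x summable_on B"
  shows "(\<lambda>(x,i). g x i) summable_on (A \<times> B)"
    and "infsum (\<lambda>(x,i). g x i) (A \<times> B) = (\<Sum>x\<in>A. infsum (g x) B)"
proof -
  have "(\<lambda>z. norm ((\<lambda>(x,i). g x i) z)) summable_on Sigma A (\<lambda>_. B)"
    by (rule Infinite_Sum.abs_summable_on_Sigma_iff[where f="\<lambda>(x,i). g x i" and A=A and B="\<lambda>_. B", THEN iffD2])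
       (use s A summable_on_iff_abs_summable_on_complex in auto)
  thus s2: "(\<lambda>(x,i). g x i) summable_on (A \<times> B)" by (rule abs_summable_summable)
  have "infsum (\<lambda>x. infsum (g x) B) A = infsum (\<lambda>(x,i). g x i) (A \<times> B)"
    by (rule infsum_Sigma'_banach[OF s2])
  thus "infsum (\<lambda>(x,i). g x i) (A \<times> B) = (\<Sum>x\<in>A. infsum (g x) B)" using A by simp
qed

lemma fin_sigma_r:
  fixes g :: "'x \<Rightarrow> 'i \<Rightarrow> real"
  assumes A: "finite A" and s: "\<And>x. x \<in> A \<Longrightarrow> g x summable_on B"
  shows "(\<lambda>(x,i). g x i) summable_on (A \<times> B)"
    and "infsum (\<lambda>(x,i). g x i) (A \<times> B) = (\<Sum>x\<in>A. infsum (g x) B)"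
proof -
  have "(\<lambda>z. norm ((\<lambda>(x,i). g x i) z)) summable_on Sigma A (\<lambda>_. B)"
    by (rule Infinite_Sum.abs_summable_on_Sigma_iff[where f="\<lambda>(x,i). g x i" and A=A and B="\<lambda>_. B", THEN iffD2])
       (use s A summable_on_iff_abs_summable_on_real in auto)
  thus s2: "(\<lambda>(x,i). g x i) summable_on (A \<times> B)" by (rule abs_summable_summable)
  have "infsum (\<lambda>x. infsum (g x) B) A = infsum (\<lambda>(x,i). g x i) (A \<times> B)"
    by (rule infsum_Sigma'_banach[OF s2])
  thus "infsum (\<lambda>(x,i). g x i) (A \<times> B) = (\<Sum>x\<in>A. infsum (g x) B)" using A by simp
qed

lemma mapply_scale:
  "mapply M (\<lambda>i. c * f i) = (\<lambda>j. c * mapply M f j)"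
  unfolding mapply_def by (simp add: infsum_cmult_right' mult_ac)

lemma phiU_apply:
  fixes U :: "'a::finite \<Rightarrow> 'x::finite \<Rightarrow> 'u \<Rightarrow> 'u \<Rightarrow> complex"
  assumes U: "\<And>a x. bop I J (U a x)" and v: "l2 I v"
  shows "mapply (phiU U S) v j = (\<Sum>x\<in>UNIV. \<Sum>a\<in>UNIV. S x a * mapply (U a x) v j)"
proof -
  have r: "(\<lambda>i. U a x j i * v i) summable_on UNIV" for a x by (rule bop_row[OF U v])
  have "mapply (phiU U S) v j = infsum (\<lambda>i. \<Sum>x\<in>UNIV. \<Sum>a\<in>UNIV. S x a * (U a x j i * v i)) UNIV"
    unfolding mapply_def phiU_def by (rule infsum_cong) (simp add: sum_distrib_left sum_distrib_right algebra_simps)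
  also have "\<dots> = (\<Sum>x\<in>UNIV. infsum (\<lambda>i. \<Sum>a\<in>UNIV. S x a * (U a x j i * v i)) UNIV)"
    by (rule infsum_finsum(1)) (auto intro!: infsum_finsum(2) summable_on_cmult_right r)
  also have "\<dots> = (\<Sum>x\<in>UNIV. \<Sum>a\<in>UNIV. S x a * mapply (U a x) v j)"
    by (rule sum.cong[OF refl], subst infsum_finsum(1))
       (auto intro!: summable_on_cmult_right r simp: infsum_cmult_right' mapply_def)
  finally show ?thesis .
qed

locale spec_setting =
  fixes \<xi> :: "'x::finite \<times> 'r \<Rightarrow> complex" and P :: "'a::finite \<times> 'r \<Rightarrow> 'a \<times> 'r \<Rightarrow> complex"
    and Nidx :: "nat set" and lam :: "nat \<Rightarrow> real" and \<gamma> :: "nat \<Rightarrow> 'a \<times> 'r \<Rightarrow> complex"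
  assumes xi_l2: "l2 UNIV \<xi>" and xi_norm: "vnorm \<xi> = 1" and P_bop: "bop UNIV UNIV P"
    and P_pos: "positive_op P" and spec: "spectral_decomp P Nidx lam \<gamma>"
begin

lemma gam_l2: "l2 UNIV (\<gamma> n)"
  using spec unfolding spectral_decomp_def by (cases "n \<in> Nidx") (auto simp: l2_zero)

lemma lam_out: "n \<notin> Nidx \<Longrightarrow> lam n = 0"
  using spec unfolding spectral_decomp_def by auto

lemma gam_out: "n \<notin> Nidx \<Longrightarrow> \<gamma> n = (\<lambda>_. 0)"
  using spec unfolding spectral_decomp_def by auto

lemma gam_norm: "n \<in> Nidx \<Longrightarrow> vnorm (\<gamma> n) = 1"
  using spec unfolding spectral_decomp_def by auto

lemma gam_orth: "m \<in> Nidx \<Longrightarrow> n \<in> Nidx \<Longrightarrow> m \<noteq> n \<Longrightarrow> vinner (\<gamma> m) (\<gamma> n) = 0"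
  using spec unfolding spectral_decomp_def by auto

definition SN :: "nat \<Rightarrow> ('a \<times> 'r \<Rightarrow> complex) \<Rightarrow> 'a \<times> 'r \<Rightarrow> complex" where
  "SN N u = (\<lambda>i. \<Sum>n<N. complex_of_real (lam n) * vinner u (\<gamma> n) * \<gamma> n i)"

lemma strong: "l2 UNIV u \<Longrightarrow> (\<lambda>N. vnorm (\<lambda>i. mapply P u i - SN N u i)) \<longlonglongrightarrow> 0"
  using spec unfolding spectral_decomp_def SN_def by auto

lemma SN_l2: "l2 UNIV (SN N u)"
  unfolding SN_def by (rule l2_sum) (auto intro: l2_scale gam_l2)

lemma eig: assumes m: "m \<in> Nidx" shows "mapply P (\<gamma> m) = (\<lambda>i. complex_of_real (lam m) * \<gamma> m i)"
proof -
  have ev: "eventually (\<lambda>N. vnorm (\<lambda>i. mapply P (\<gamma> m) i - SN N (\<gamma> m) i) =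
      vnorm (\<lambda>i. mapply P (\<gamma> m) i - complex_of_real (lam m) * \<gamma> m i)) sequentially"
  proof (rule eventually_sequentiallyI[of "Suc m"])
    fix N assume N: "Suc m \<le> N"
    have t: "complex_of_real (lam n) * vinner (\<gamma> m) (\<gamma> n) * \<gamma> n i = 0" if "n \<noteq> m" for n i
      using gam_orth[OF m, of n] lam_out[of n] that by (cases "n \<in> Nidx") auto
    have s0: "(\<Sum>n\<in>{..<N} - {m}. complex_of_real (lam n) * vinner (\<gamma> m) (\<gamma> n) * \<gamma> n i) = 0" for i
      by (rule sum.neutral) (use t in blast)
    have "SN N (\<gamma> m) i = complex_of_real (lam m) * vinner (\<gamma> m) (\<gamma> m) * \<gamma> m i" for i
      unfolding SN_def using N s0[of i] by (simp add: sum.remove[of "{..<N}" m])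
    moreover have "vinner (\<gamma> m) (\<gamma> m) = 1" using vinner_self[OF gam_l2] gam_norm[OF m] by simp
    ultimately show "vnorm (\<lambda>i. mapply P (\<gamma> m) i - SN N (\<gamma> m) i) =
      vnorm (\<lambda>i. mapply P (\<gamma> m) i - complex_of_real (lam m) * \<gamma> m i)" by simp
  qed
  have "(\<lambda>N. vnorm (\<lambda>i. mapply P (\<gamma> m) i - complex_of_real (lam m) * \<gamma> m i)) \<longlonglongrightarrow> 0"
    using strong[OF gam_l2[of m]] tendsto_cong[OF ev] by simp
  hence z: "vnorm (\<lambda>i. mapply P (\<gamma> m) i - complex_of_real (lam m) * \<gamma> m i) = 0"
    using LIMSEQ_const_iff by blast
  have "l2 UNIV (\<lambda>i. mapply P (\<gamma> m) i - complex_of_real (lam m) * \<gamma> m i)"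
    by (intro l2_diff bop_l2[OF P_bop gam_l2] l2_scale gam_l2)
  from vnorm_zero_imp[OF this z] show ?thesis by (auto simp: fun_eq_iff)
qed

lemma lam_nonneg: "0 \<le> lam n"
proof (cases "n \<in> Nidx")
  case False thus ?thesis using lam_out by simp
next
  case True
  have "vinner (mapply P (\<gamma> n)) (\<gamma> n) = complex_of_real (lam n) * vinner (\<gamma> n) (\<gamma> n)"
    by (simp add: eig[OF True] vinner_scale1)
  also have "vinner (\<gamma> n) (\<gamma> n) = 1" using vinner_self[OF gam_l2] gam_norm[OF True] by simp
  finally have "vinner (mapply P (\<gamma> n)) (\<gamma> n) = complex_of_real (lam n)" by simp
  moreover have "0 \<le> Re (vinner (mapply P (\<gamma> n)) (\<gamma> n))"
    using P_pos gam_l2 unfolding positive_op_def by blast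
  ultimately show ?thesis by simp
qed

lemma quad:
  assumes u: "l2 UNIV u"
  shows "((\<lambda>n. lam n * (cmod (vinner u (\<gamma> n)))^2) has_sum Re (vinner (mapply P u) u)) UNIV"
proof -
  let ?t = "\<lambda>n. lam n * (cmod (vinner u (\<gamma> n)))^2"
  have eqN: "vinner (SN N u) u = complex_of_real (\<Sum>n<N. ?t n)" for N
  proof -
    have "vinner (SN N u) u = (\<Sum>n<N. vinner (\<lambda>i. complex_of_real (lam n) * vinner u (\<gamma> n) * \<gamma> n i) u)"
      unfolding SN_def by (rule vinner_sum1[OF _ _ u]) (auto intro: l2_scale gam_l2)
    also have "\<dots> = (\<Sum>n<N. (complex_of_real (lam n) * vinner u (\<gamma> n)) * vinner (\<gamma> n) u)"
      by (simp only: vinner_scale1)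
    also have "\<dots> = (\<Sum>n<N. complex_of_real (lam n) * (vinner u (\<gamma> n) * cnj (vinner u (\<gamma> n))))"
    proof -
      have h: "vinner (\<gamma> n) u = cnj (vinner u (\<gamma> n))" for n by (rule vinner_cnj)
      show ?thesis by (simp add: h mult_ac)
    qed
    also have "\<dots> = (\<Sum>n<N. complex_of_real (?t n))"
      by (simp add: complex_norm_square[symmetric])
    finally show ?thesis by simp
  qed
  have bound: "cmod (vinner (SN N u) u - vinner (mapply P u) u) \<le> vnorm (\<lambda>i. mapply P u i - SN N u i) * vnorm u" for N
  proof -
    have "vinner (SN N u) u - vinner (mapply P u) u = - vinner (\<lambda>i. mapply P u i - SN N u i) u"
      using vinner_diff1[OF bop_l2[OF P_bop u] SN_l2 u] by simp
    thus ?thesis using vinner_CS[OF l2_diff[OF bop_l2[OF P_bop u] SN_l2] u] by simp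
  qed
  have "(\<lambda>N. vnorm (\<lambda>i. mapply P u i - SN N u i) * vnorm u) \<longlonglongrightarrow> 0 * vnorm u"
    by (intro tendsto_mult strong[OF u] tendsto_const)
  hence t0: "(\<lambda>N. vnorm (\<lambda>i. mapply P u i - SN N u i) * vnorm u) \<longlonglongrightarrow> 0" by simp
  have "(\<lambda>N. vinner (SN N u) u - vinner (mapply P u) u) \<longlonglongrightarrow> 0"
    by (rule Lim_null_comparison[OF always_eventually t0]) (intro allI bound)
  hence "(\<lambda>N. vinner (SN N u) u) \<longlonglongrightarrow> vinner (mapply P u) u" using Lim_null by blast
  hence "(\<lambda>N. Re (vinner (SN N u) u)) \<longlonglongrightarrow> Re (vinner (mapply P u) u)" by (rule tendsto_Re)
  hence "?t sums Re (vinner (mapply P u) u)" unfolding sums_def eqN by simp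
  thus ?thesis by (rule sums_nonneg_imp_has_sum) (simp add: lam_nonneg)
qed

lemma P_CP:
  obtains CP where "CP \<ge> 0" "\<And>u. l2 UNIV u \<Longrightarrow> Re (vinner (mapply P u) u) \<le> CP * (vnorm u)^2"
proof -
  obtain C where C: "C \<ge> 0" "\<And>f. l2 UNIV f \<Longrightarrow> (\<forall>i. (\<lambda>j. P i j * f j) summable_on UNIV) \<and>
      l2 UNIV (mapply P f) \<and> vnorm (mapply P f) \<le> C * vnorm f" using bop_boundE[OF P_bop] by blast
  show ?thesis
  proof (rule that[OF C(1)])
    fix u :: "'a \<times> 'r \<Rightarrow> complex" assume u: "l2 UNIV u"
    have "Re (vinner (mapply P u) u) \<le> cmod (vinner (mapply P u) u)" by (rule complex_Re_le_cmod)
    also have "\<dots> \<le> vnorm (mapply P u) * vnorm u" by (rule vinner_CS[OF bop_l2[OF P_bop u] u])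
    also have "\<dots> \<le> C * vnorm u * vnorm u" using C(2)[OF u] by (intro mult_right_mono vnorm_nonneg) auto
    finally show "Re (vinner (mapply P u) u) \<le> C * (vnorm u)^2" by (simp add: power2_eq_square mult_ac)
  qed
qed

end

lemma block_apply:
  fixes U :: "'a::finite \<Rightarrow> 'x::finite \<Rightarrow> 'u \<Rightarrow> 'u \<Rightarrow> complex"
  assumes U: "\<And>a x. bop I J (U a x)" and v: "l2 I v"
  shows "mapply (blockmat U) (\<lambda>(x,i). c x * v i) (a,j) = (\<Sum>x\<in>UNIV. c x * mapply (U a x) v j)"
proof -
  have r: "(\<lambda>i. U a x j i * v i) summable_on UNIV" for a x by (rule bop_row[OF U v])
  have "mapply (blockmat U) (\<lambda>(x,i). c x * v i) (a,j) = infsum (\<lambda>(x,i). c x * (U a x j i * v i)) (UNIV \<times> UNIV)"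
    unfolding mapply_def blockmat_def by (simp add: case_prod_unfold mult_ac)
  also have "\<dots> = (\<Sum>x\<in>UNIV. infsum (\<lambda>i. c x * (U a x j i * v i)) UNIV)"
    by (rule fin_sigma_c(2)) (auto intro: summable_on_cmult_right r)
  also have "\<dots> = (\<Sum>x\<in>UNIV. c x * mapply (U a x) v j)"
    by (simp add: infsum_cmult_right' mapply_def)
  finally show ?thesis .
qed

lemma l2_pair_col:
  fixes U :: "'a::finite \<Rightarrow> 'x \<Rightarrow> 'u \<Rightarrow> 'u \<Rightarrow> complex"
  assumes U: "\<And>a. bop I J (U a x)" and v: "l2 I v"
  shows "l2 UNIV (\<lambda>(a,j). mapply (U a x) v j)"
proof -
  have "(\<lambda>(a,j). (cmod (mapply (U a x) v j))^2) summable_on UNIV \<times> UNIV"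
    by (rule fin_sigma_r(1)) (auto intro: l2_summable bop_l2[OF U v])
  thus ?thesis unfolding l2_def by (simp add: case_prod_unfold)
qed

lemma block_has_sum:
  fixes U :: "'a::finite \<Rightarrow> 'x::finite \<Rightarrow> 'u \<Rightarrow> 'u \<Rightarrow> complex"
  assumes BI: "block_isometry I J U" and v: "l2 I v"
  shows "((\<lambda>(a,j). (cmod (\<Sum>x\<in>UNIV. c x * mapply (U a x) v j))^2) has_sum
           ((\<Sum>x\<in>UNIV. (cmod (c x))^2) * (vnorm v)^2)) UNIV"
proof -
  have U: "\<And>a x. bop I J (U a x)" using BI unfolding block_isometry_def by blast
  define f where "f = (\<lambda>(x,i). c x * v i)"
  define w where "w = (\<lambda>(a,j). \<Sum>x\<in>UNIV. c x * mapply (U a x) v j)"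
  have fsum: "(\<lambda>(x,i). (cmod (c x))^2 * (cmod (v i))^2) summable_on UNIV \<times> UNIV"
    by (rule fin_sigma_r(1)) (auto intro: summable_on_cmult_right l2_summable[OF v])
  have fl2: "l2 (UNIV \<times> I) f"
    unfolding l2_def f_def using fsum l2_out[OF v]
    by (auto simp: norm_mult power_mult_distrib case_prod_unfold)
  have wl2: "l2 UNIV w"
  proof -
    have "l2 UNIV (\<lambda>z. \<Sum>x\<in>UNIV. c x * (\<lambda>(a,j). mapply (U a x) v j) z)"
      by (rule l2_sum) (auto intro!: l2_scale l2_pair_col U v)
    thus ?thesis unfolding w_def by (simp add: case_prod_unfold)
  qed
  have mw: "mapply (blockmat U) f = w"
  proof (rule ext)
    fix z :: "'a \<times> 'u" show "mapply (blockmat U) f z = w z"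
      unfolding f_def w_def by (cases z) (simp only: block_apply[OF U v] prod.case)
  qed
  have iso: "\<forall>f. l2 (UNIV \<times> I) f \<longrightarrow> vnorm (mapply (blockmat U) f) = vnorm f"
    using BI unfolding block_isometry_def by blast
  have "vnorm (mapply (blockmat U) f) = vnorm f" using iso fl2 by blast
  hence "vnorm w = vnorm f" by (simp only: mw)
  hence "(vnorm w)^2 = (vnorm f)^2" by simp
  also have "(vnorm f)^2 = infsum (\<lambda>(x,i). (cmod (c x))^2 * (cmod (v i))^2) (UNIV \<times> UNIV)"
    unfolding vnorm_sq f_def by (simp add: norm_mult power_mult_distrib case_prod_unfold)
  also have "\<dots> = (\<Sum>x\<in>UNIV. infsum (\<lambda>i. (cmod (c x))^2 * (cmod (v i))^2) UNIV)"
    by (rule fin_sigma_r(2)) (auto intro: summable_on_cmult_right l2_summable[OF v])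
  also have "\<dots> = (\<Sum>x\<in>UNIV. (cmod (c x))^2) * (vnorm v)^2"
    by (simp add: infsum_cmult_right' vnorm_sq sum_distrib_right)
  finally have eq: "(vnorm w)^2 = (\<Sum>x\<in>UNIV. (cmod (c x))^2) * (vnorm v)^2" .
  have "((\<lambda>z. (cmod (w z))^2) has_sum (vnorm w)^2) UNIV"
    unfolding vnorm_sq using l2_summable[OF wl2] by simp
  thus ?thesis unfolding eq[symmetric] w_def by (simp add: case_prod_unfold)
qed

context spec_setting
begin

definition uvec :: "('a \<Rightarrow> 'x \<Rightarrow> 'u \<Rightarrow> 'u \<Rightarrow> complex) \<Rightarrow> ('u \<Rightarrow> complex) \<Rightarrow> 'u \<Rightarrow> 'a \<times> 'r \<Rightarrow> complex" where
  "uvec U v j = (\<lambda>(a,r). \<Sum>x\<in>UNIV. \<xi> (x,r) * cnj (mapply (U a x) v j))"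

lemma xi_fiber: "((\<lambda>r. \<Sum>x\<in>UNIV. (cmod (\<xi> (x,r)))^2) has_sum 1) UNIV"
proof -
  have h: "((\<lambda>z. (cmod (\<xi> z))^2) has_sum 1) (UNIV \<times> UNIV)"
  proof -
    have "infsum (\<lambda>z. (cmod (\<xi> z))^2) UNIV = 1" using vnorm_sq[of \<xi>] xi_norm by simp
    with has_sum_infsum[OF l2_summable[OF xi_l2]] show ?thesis by simp
  qed
  hence h2: "((\<lambda>(r,x). (cmod (\<xi> (x,r)))^2) has_sum 1) (UNIV \<times> UNIV)"
    using has_sum_swap[THEN iffD1, OF h] by (simp add: case_prod_unfold)
  show ?thesis
    by (rule has_sum_Sigma'[OF h2[unfolded UNIV_Times_UNIV[symmetric]]]) auto
qed

lemma uvec_has_sum: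
  fixes U :: "'a \<Rightarrow> 'x \<Rightarrow> 'u \<Rightarrow> 'u \<Rightarrow> complex"
  assumes BI: "block_isometry I J U" and v: "l2 I v"
  shows "((\<lambda>(j,p). (cmod (uvec U v j p))^2) has_sum (vnorm v)^2) UNIV"
proof -
  let ?H = "\<lambda>(r,(a,j)). (cmod (\<Sum>x\<in>UNIV. cnj (\<xi> (x,r)) * mapply (U a x) v j))^2"
  have fib: "((\<lambda>(a,j). (cmod (\<Sum>x\<in>UNIV. cnj (\<xi> (x,r)) * mapply (U a x) v j))^2) has_sum
             ((\<Sum>x\<in>UNIV. (cmod (\<xi> (x,r)))^2) * (vnorm v)^2)) UNIV" for r
    using block_has_sum[OF BI v, of "\<lambda>x. cnj (\<xi> (x,r))"] by simp
  have tot0: "((\<lambda>r. (\<Sum>x\<in>UNIV. (cmod (\<xi> (x,r)))^2) * (vnorm v)^2) has_sum (1 * (vnorm v)^2)) UNIV"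
    by (rule has_sum_cmult_left[OF xi_fiber])
  hence tot: "((\<lambda>r. (\<Sum>x\<in>UNIV. (cmod (\<xi> (x,r)))^2) * (vnorm v)^2) has_sum (vnorm v)^2) UNIV"
    by simp
  have fib': "((\<lambda>y. ?H (r,y)) has_sum ((\<Sum>x\<in>UNIV. (cmod (\<xi> (x,r)))^2) * (vnorm v)^2)) UNIV" for r
    using fib[of r] by (simp add: case_prod_unfold)
  have sH: "?H summable_on Sigma UNIV (\<lambda>_. UNIV)"
    apply (rule summable_on_SigmaI[where g="\<lambda>r. (\<Sum>x\<in>UNIV. (cmod (\<xi> (x,r)))^2) * (vnorm v)^2"])
    subgoal for r by (rule fib')
    subgoal using tot summable_on_def by blast
    subgoal by (simp add: case_prod_unfold)
    done
  have hH: "(?H has_sum (vnorm v)^2) (Sigma UNIV (\<lambda>_. UNIV))"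
    by (rule has_sum_SigmaI[OF _ tot sH]) (rule fib')
  have "(?H has_sum (vnorm v)^2) UNIV = ((\<lambda>(j,p). (cmod (uvec U v j p))^2) has_sum (vnorm v)^2) UNIV"
  proof (rule has_sum_reindex_bij_witness[where j="\<lambda>(r,(a,j)). (j,(a,r))" and i="\<lambda>(j,(a,r)). (r,(a,j))"])
    fix z :: "'r \<times> 'a \<times> 'u"
    obtain r a j where z: "z = (r,(a,j))" by (cases z) auto
    have e: "cnj (\<Sum>x\<in>UNIV. cnj (\<xi> (x,r)) * mapply (U a x) v j) = (\<Sum>x\<in>UNIV. \<xi> (x,r) * cnj (mapply (U a x) v j))"
      by simp
    show "(\<lambda>(j,p). (cmod (uvec U v j p))^2) ((\<lambda>(r,(a,j)). (j,(a,r))) z) = ?H z"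
      unfolding z uvec_def by (simp only: prod.case e[symmetric] complex_mod_cnj)
  qed (simp_all add: case_prod_unfold)
  thus ?thesis using hH by simp
qed

lemma uvec_l2:
  fixes U :: "'a \<Rightarrow> 'x \<Rightarrow> 'u \<Rightarrow> 'u \<Rightarrow> complex"
  assumes BI: "block_isometry I J U" and v: "l2 I v"
  shows "l2 UNIV (uvec U v j)"
    and "((\<lambda>j. (vnorm (uvec U v j))^2) has_sum (vnorm v)^2) UNIV"
proof -
  have h: "((\<lambda>(j,p). (cmod (uvec U v j p))^2) has_sum (vnorm v)^2) (Sigma UNIV (\<lambda>_. UNIV))"
    using uvec_has_sum[OF BI v] by simp
  have s: "(\<lambda>p. (cmod (uvec U v j p))^2) summable_on UNIV" for j
    using summable_on_SigmaD1[of "\<lambda>j p. (cmod (uvec U v j p))^2" UNIV "\<lambda>_. UNIV" j] h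
    unfolding summable_on_def by auto
  thus "l2 UNIV (uvec U v j)" unfolding l2_def by simp
  have "((\<lambda>j. infsum (\<lambda>p. (cmod (uvec U v j p))^2) UNIV) has_sum (vnorm v)^2) UNIV"
    by (rule has_sum_Sigma'[OF h]) (use s in \<open>auto intro: has_sum_infsum\<close>)
  thus "((\<lambda>j. (vnorm (uvec U v j))^2) has_sum (vnorm v)^2) UNIV"
    by (simp only: vnorm_sq)
qed

lemma uvec_total:
  fixes U :: "'a \<Rightarrow> 'x \<Rightarrow> 'u \<Rightarrow> 'u \<Rightarrow> complex"
  assumes BI: "block_isometry I J U" and v: "\<And>k. l2 I (v k)"
    and vs: "((\<lambda>k. (vnorm (v k))^2) has_sum 1) UNIV"
  shows "((\<lambda>(k,j). (vnorm (uvec U (v k) j))^2) has_sum 1) UNIV"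
proof -
  have f: "((\<lambda>j. (vnorm (uvec U (v k) j))^2) has_sum (vnorm (v k))^2) UNIV" for k
    by (rule uvec_l2(2)[OF BI v])
  have s: "(\<lambda>(k,j). (vnorm (uvec U (v k) j))^2) summable_on Sigma UNIV (\<lambda>_. UNIV)"
    by (rule summable_on_SigmaI[where g="\<lambda>k. (vnorm (v k))^2"]) (use f vs summable_on_def in auto)
  have "((\<lambda>(k,j). (vnorm (uvec U (v k) j))^2) has_sum 1) (Sigma UNIV (\<lambda>_. UNIV))"
    by (rule has_sum_SigmaI[OF _ vs s]) (use f in auto)
  thus ?thesis by simp
qed

end

lemma pt_le_vnorm: "l2 I f \<Longrightarrow> (cmod (f p))^2 \<le> (vnorm f)^2"
proof -
  assume f: "l2 I f"
  have "sum (\<lambda>i. (cmod (f i))^2) {p} \<le> infsum (\<lambda>i. (cmod (f i))^2) UNIV"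
    by (rule finite_sum_le_infsum[OF l2_summable[OF f]]) auto
  thus ?thesis by (simp add: vnorm_sq)
qed

locale g1_setting = spec_setting \<xi> P Nidx lam \<gamma>
  for \<xi> :: "'x::finite \<times> 'r \<Rightarrow> complex" and P :: "'a::finite \<times> 'r \<Rightarrow> 'a \<times> 'r \<Rightarrow> complex"
    and Nidx lam \<gamma> +
  fixes I J :: "'u set" and U :: "'a \<Rightarrow> 'x \<Rightarrow> 'u \<Rightarrow> 'u \<Rightarrow> complex"
    and v :: "nat \<Rightarrow> 'u \<Rightarrow> complex" and \<sigma> :: "('u \<Rightarrow> 'u \<Rightarrow> complex) \<Rightarrow> complex"
  assumes BI: "block_isometry I J U" and vl2: "\<And>k. l2 I (v k)"
    and vs: "((\<lambda>k. (vnorm (v k))^2) has_sum 1) UNIV"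
    and sig: "\<And>T. bop I I T \<Longrightarrow> (\<lambda>k. vinner (mapply T (v k)) (v k)) sums \<sigma> T"
begin

lemma Ubop: "bop I J (U a x)"
  using BI unfolding block_isometry_def by blast

definition um :: "nat \<times> 'u \<Rightarrow> 'a \<times> 'r \<Rightarrow> complex" where
  "um m = uvec U (v (fst m)) (snd m)"

lemma um_l2: "l2 UNIV (um m)"
  unfolding um_def by (rule uvec_l2(1)[OF BI vl2])

lemma um_tot: "((\<lambda>m. (vnorm (um m))^2) has_sum 1) UNIV"
  using uvec_total[OF BI vl2 vs] unfolding um_def by (simp add: case_prod_unfold)

lemma um_sq_summable: "(\<lambda>m. (vnorm (um m))^2) summable_on UNIV"
  using um_tot summable_on_def by blast

lemma um_pt: "(\<lambda>m. (cmod (um m p))^2) summable_on UNIV"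
  by (rule summable_on_comparison_test[OF um_sq_summable]) (auto intro: pt_le_vnorm[OF um_l2])

lemma Yterm:
  "(\<Sum>x\<in>UNIV. \<Sum>x'\<in>UNIV. \<xi> (x,r) * cnj (\<xi> (x',r')) * vinner (mapply (U a' x') (v k)) (mapply (U a x) (v k)))
   = infsum (\<lambda>j. um (k,j) (a,r) * cnj (um (k,j) (a',r'))) UNIV"
proof -
  let ?M = "\<lambda>a x j. mapply (U a x) (v k) j"
  have ml2: "l2 J (mapply (U a x) (v k))" for a x by (rule bop_l2[OF Ubop vl2])
  have s: "(\<lambda>j. ?M a' x' j * cnj (?M a x j)) summable_on UNIV" for a x a' x'
    by (rule vinner_summable[OF ml2 ml2])
  have "infsum (\<lambda>j. um (k,j) (a,r) * cnj (um (k,j) (a',r'))) UNIV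
      = infsum (\<lambda>j. \<Sum>x\<in>UNIV. \<Sum>x'\<in>UNIV. \<xi> (x,r) * cnj (\<xi> (x',r')) * (?M a' x' j * cnj (?M a x j))) UNIV"
  proof (rule infsum_cong)
    fix j
    show "um (k,j) (a,r) * cnj (um (k,j) (a',r')) =
      (\<Sum>x\<in>UNIV. \<Sum>x'\<in>UNIV. \<xi> (x,r) * cnj (\<xi> (x',r')) * (?M a' x' j * cnj (?M a x j)))"
      unfolding um_def uvec_def fst_conv snd_conv prod.case cnj_sum sum_product
      by (intro sum.cong refl) (simp add: mult_ac)
  qed
  also have "\<dots> = (\<Sum>x\<in>UNIV. infsum (\<lambda>j. \<Sum>x'\<in>UNIV. \<xi> (x,r) * cnj (\<xi> (x',r')) * (?M a' x' j * cnj (?M a x j))) UNIV)"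
    by (rule infsum_finsum(1)) (auto intro!: infsum_finsum(2) summable_on_cmult_right s)
  also have "\<dots> = (\<Sum>x\<in>UNIV. \<Sum>x'\<in>UNIV. \<xi> (x,r) * cnj (\<xi> (x',r')) * vinner (mapply (U a' x') (v k)) (mapply (U a x) (v k)))"
    by (rule sum.cong[OF refl], subst infsum_finsum(1))
       (auto intro!: summable_on_cmult_right s simp: infsum_cmult_right' vinner_def)
  finally show ?thesis ..
qed

lemma Yentry:
  "tensor_id (GammaU U \<sigma>) (rank1 \<xi> \<xi>) (a,r) (a',r') = infsum (\<lambda>m. um m (a,r) * cnj (um m (a',r'))) UNIV"
proof -
  let ?T = "\<lambda>a x a' x'. mmul (adj (U a x)) (U a' x')"
  have st: "(\<lambda>k. vinner (mapply (U a' x') (v k)) (mapply (U a x) (v k))) sums \<sigma> (?T a x a' x')" for a x a' x'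
  proof -
    have "(\<lambda>k. vinner (mapply (?T a x a' x') (v k)) (v k)) sums \<sigma> (?T a x a' x')"
      by (rule sig[OF bop_mmul_adj[OF Ubop Ubop]])
    thus ?thesis by (simp add: vinner_mmul_adj[OF Ubop Ubop vl2])
  qed
  have Y: "tensor_id (GammaU U \<sigma>) (rank1 \<xi> \<xi>) (a,r) (a',r') =
      (\<Sum>x\<in>UNIV. \<Sum>x'\<in>UNIV. \<xi> (x,r) * cnj (\<xi> (x',r')) * \<sigma> (?T a x a' x'))"
    unfolding tensor_id_def GammaU_def rank1_def by simp
  have s1: "(\<lambda>k. \<Sum>x\<in>UNIV. \<Sum>x'\<in>UNIV. \<xi> (x,r) * cnj (\<xi> (x',r')) * vinner (mapply (U a' x') (v k)) (mapply (U a x) (v k)))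
      sums tensor_id (GammaU U \<sigma>) (rank1 \<xi> \<xi>) (a,r) (a',r')"
    unfolding Y by (intro sums_sum sums_mult st)
  let ?g = "\<lambda>m. um m (a,r) * cnj (um m (a',r'))"
  have gs: "?g summable_on UNIV"
    using complex_CS(1)[OF um_pt[of "(a,r)"], of "\<lambda>m. cnj (um m (a',r'))"] um_pt[of "(a',r')"] by simp
  have gs2: "(\<lambda>(k,j). ?g (k,j)) summable_on (UNIV \<times> UNIV)"
    using gs by (simp add: case_prod_unfold)
  have h: "(?g has_sum infsum ?g UNIV) (Sigma UNIV (\<lambda>_. UNIV))"
    using has_sum_infsum[OF gs] by simp
  have fs: "(\<lambda>j. ?g (k,j)) summable_on UNIV" for k
    using summable_on_SigmaD1[of "\<lambda>k j. ?g (k,j)" UNIV "\<lambda>_. UNIV" k] gs2 by simp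
  have "((\<lambda>k. infsum (\<lambda>j. ?g (k,j)) UNIV) has_sum infsum ?g UNIV) UNIV"
    by (rule has_sum_Sigma'[OF h]) (use fs in \<open>auto intro: has_sum_infsum\<close>)
  hence "(\<lambda>k. infsum (\<lambda>j. ?g (k,j)) UNIV) sums infsum ?g UNIV"
    by (rule has_sum_imp_sums)
  hence "(\<lambda>k. \<Sum>x\<in>UNIV. \<Sum>x'\<in>UNIV. \<xi> (x,r) * cnj (\<xi> (x',r')) * vinner (mapply (U a' x') (v k)) (mapply (U a x) (v k)))
      sums infsum ?g UNIV"
    by (simp only: Yterm)
  thus ?thesis using s1 sums_unique2 by blast
qed

lemma colP: obtains CPc where "CPc \<ge> 0" "\<And>p. l2 UNIV (\<lambda>q. P q p) \<and> vnorm (\<lambda>q. P q p) \<le> CPc"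
  using bop_col[OF P_bop] by blast

lemma abs_sigma_crit:
  fixes H :: "'m \<Rightarrow> 'q \<Rightarrow> complex"
  assumes fib: "\<And>m. (\<lambda>q. H m q) summable_on UNIV"
    and bnd: "\<And>m. infsum (\<lambda>q. cmod (H m q)) UNIV \<le> B m"
    and Bs: "B summable_on UNIV"
  shows "(\<lambda>(m,q). H m q) summable_on (UNIV \<times> UNIV)"
proof -
  have fa: "(\<lambda>q. cmod (H m q)) summable_on UNIV" for m
    using fib[of m] summable_on_iff_abs_summable_on_complex by blast
  have cmp: "(\<lambda>m. infsum (\<lambda>q. cmod (H m q)) UNIV) summable_on UNIV"
    apply (rule summable_on_comparison_test[OF Bs])
    subgoal for m by (rule bnd)
    subgoal for m by (rule infsum_nonneg) simp
    done
  have eq: "(\<lambda>m. norm (infsum (\<lambda>q. cmod (H m q)) UNIV)) = (\<lambda>m. infsum (\<lambda>q. cmod (H m q)) UNIV)"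
  proof (rule ext)
    fix m
    have "0 \<le> infsum (\<lambda>q. cmod (H m q)) UNIV" by (rule infsum_nonneg) simp
    thus "norm (infsum (\<lambda>q. cmod (H m q)) UNIV) = infsum (\<lambda>q. cmod (H m q)) UNIV" by simp
  qed
  have "(\<lambda>z. norm ((\<lambda>(m,q). H m q) z)) summable_on Sigma UNIV (\<lambda>_. UNIV)"
    apply (rule Infinite_Sum.abs_summable_on_Sigma_iff[where f="\<lambda>(m,q). H m q", THEN iffD2])
    apply (rule conjI)
    subgoal using fa by simp
    subgoal using cmp eq by simp
    done
  thus ?thesis by (rule abs_summable_summable)
qed

lemma row_trace:
  "infsum (\<lambda>q. tensor_id (GammaU U \<sigma>) (rank1 \<xi> \<xi>) p q * P q p) UNIV
     = infsum (\<lambda>m. um m p * vinner (\<lambda>q. P q p) (um m)) UNIV"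
proof -
  obtain CPc where CPc: "CPc \<ge> 0" "\<And>p. l2 UNIV (\<lambda>q. P q p) \<and> vnorm (\<lambda>q. P q p) \<le> CPc"
    using colP by blast
  define H where "H m q = um m p * (cnj (um m q) * P q p)" for m q
  have Y: "tensor_id (GammaU U \<sigma>) (rank1 \<xi> \<xi>) p q = infsum (\<lambda>m. um m p * cnj (um m q)) UNIV" for q
    using Yentry[of "fst p" "snd p" "fst q" "snd q"] by simp
  have cs: "(\<lambda>q. cnj (um m q) * P q p) summable_on UNIV" for m
    by (rule l2_prod_summable[OF l2_cnj[OF um_l2] conjunct1[OF CPc(2)]])
  have fib: "(\<lambda>q. H m q) summable_on UNIV" for m
    unfolding H_def by (rule summable_on_cmult_right[OF cs])
  have bnd: "infsum (\<lambda>q. cmod (H m q)) UNIV \<le> CPc * (cmod (um m p) * vnorm (um m))" for m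
  proof -
    have "infsum (\<lambda>q. cmod (H m q)) UNIV = cmod (um m p) * infsum (\<lambda>q. \<bar>cmod (um m q) * cmod (P q p)\<bar>) UNIV"
      unfolding H_def by (simp add: norm_mult infsum_cmult_right')
    also have "\<dots> \<le> cmod (um m p) * (sqrt (infsum (\<lambda>q. (cmod (um m q))^2) UNIV) * sqrt (infsum (\<lambda>q. (cmod (P q p))^2) UNIV))"
      by (intro mult_left_mono CS_abs(3) l2_summable[OF um_l2] l2_summable[OF conjunct1[OF CPc(2)]]) auto
    also have "\<dots> = cmod (um m p) * (vnorm (um m) * vnorm (\<lambda>q. P q p))" by (simp add: vnorm_def)
    also have "\<dots> \<le> cmod (um m p) * (vnorm (um m) * CPc)"
      by (intro mult_left_mono) (use CPc(2)[of p] vnorm_nonneg in auto)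
    finally show ?thesis by (simp add: mult_ac)
  qed
  have Bs: "(\<lambda>m. CPc * (cmod (um m p) * vnorm (um m))) summable_on UNIV"
    by (intro summable_on_cmult_right CS_abs(2)[of "\<lambda>m. cmod (um m p)" UNIV "\<lambda>m. vnorm (um m)"] um_pt um_sq_summable)
  have S: "(\<lambda>(m,q). H m q) summable_on (UNIV \<times> UNIV)"
    by (rule abs_sigma_crit[OF fib bnd Bs])
  have "infsum (\<lambda>q. tensor_id (GammaU U \<sigma>) (rank1 \<xi> \<xi>) p q * P q p) UNIV = infsum (\<lambda>q. infsum (\<lambda>m. H m q) UNIV) UNIV"
    unfolding Y H_def
  proof (rule infsum_cong)
    fix q
    have "infsum (\<lambda>m. um m p * cnj (um m q)) UNIV * P q p = infsum (\<lambda>m. um m p * cnj (um m q) * P q p) UNIV"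
      by (rule infsum_cmult_left'[symmetric])
    thus "infsum (\<lambda>m. um m p * cnj (um m q)) UNIV * P q p = infsum (\<lambda>m. um m p * (cnj (um m q) * P q p)) UNIV"
      by (simp add: mult.assoc)
  qed
  also have "\<dots> = infsum (\<lambda>m. infsum (\<lambda>q. H m q) UNIV) UNIV"
    by (rule infsum_swap_banach[OF S, symmetric])
  also have "\<dots> = infsum (\<lambda>m. um m p * vinner (\<lambda>q. P q p) (um m)) UNIV"
    unfolding H_def vinner_def
  proof (rule infsum_cong)
    fix m
    have "infsum (\<lambda>q. um m p * (cnj (um m q) * P q p)) UNIV = um m p * infsum (\<lambda>q. cnj (um m q) * P q p) UNIV"
      by (rule infsum_cmult_right')
    thus "infsum (\<lambda>q. um m p * (cnj (um m q) * P q p)) UNIV = um m p * infsum (\<lambda>q. P q p * cnj (um m q)) UNIV"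
      by (simp add: mult.commute)
  qed
  finally show ?thesis .
qed

lemma total_trace:
  "infsum (\<lambda>p. infsum (\<lambda>m. um m p * vinner (\<lambda>q. P q p) (um m)) UNIV) UNIV
     = infsum (\<lambda>m. vinner (mapply P (um m)) (um m)) UNIV"
  and total_trace_summable: "(\<lambda>m. vinner (mapply P (um m)) (um m)) summable_on UNIV"
proof -
  obtain CA where CA: "CA \<ge> 0" "\<And>g. l2 UNIV g \<Longrightarrow> l2 UNIV (adjv P g) \<and> vnorm (adjv P g) \<le> CA * vnorm g"
    using adjv_bound[OF P_bop] by blast
  define K where "K m p = um m p * vinner (\<lambda>q. P q p) (um m)" for m p
  have Kadj: "K m p = um m p * cnj (adjv P (um m) p)" for m p
    unfolding K_def adjv_def by (simp add: cnj_vinner)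
  have hs: "((\<lambda>p. K m p) has_sum vinner (mapply P (um m)) (um m)) UNIV" for m
    unfolding K_def by (rule key_L[OF P_bop um_l2 um_l2])
  have fib: "(\<lambda>p. K m p) summable_on UNIV" for m using hs summable_on_def by blast
  have bnd: "infsum (\<lambda>p. cmod (K m p)) UNIV \<le> CA * (vnorm (um m))^2" for m
  proof -
    have al2: "l2 UNIV (adjv P (um m))" using CA(2)[OF um_l2] by blast
    have "infsum (\<lambda>p. cmod (K m p)) UNIV = infsum (\<lambda>p. \<bar>cmod (um m p) * cmod (adjv P (um m) p)\<bar>) UNIV"
      unfolding Kadj by (simp add: norm_mult)
    also have "\<dots> \<le> sqrt (infsum (\<lambda>p. (cmod (um m p))^2) UNIV) * sqrt (infsum (\<lambda>p. (cmod (adjv P (um m) p))^2) UNIV)"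
      by (intro CS_abs(3) l2_summable[OF um_l2] l2_summable[OF al2])
    also have "\<dots> = vnorm (um m) * vnorm (adjv P (um m))" by (simp add: vnorm_def)
    also have "\<dots> \<le> vnorm (um m) * (CA * vnorm (um m))"
      by (intro mult_left_mono) (use CA(2)[OF um_l2] vnorm_nonneg in auto)
    finally show ?thesis by (simp add: power2_eq_square mult_ac)
  qed
  have Bs: "(\<lambda>m. CA * (vnorm (um m))^2) summable_on UNIV"
    by (intro summable_on_cmult_right um_sq_summable)
  have S: "(\<lambda>(m,p). K m p) summable_on (UNIV \<times> UNIV)"
    by (rule abs_sigma_crit[OF fib bnd Bs])
  have "infsum (\<lambda>p. infsum (\<lambda>m. K m p) UNIV) UNIV = infsum (\<lambda>m. infsum (\<lambda>p. K m p) UNIV) UNIV"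
    by (rule infsum_swap_banach[OF S, symmetric])
  also have "\<dots> = infsum (\<lambda>m. vinner (mapply P (um m)) (um m)) UNIV"
    by (rule infsum_cong) (rule infsumI[OF hs])
  finally show "infsum (\<lambda>p. infsum (\<lambda>m. um m p * vinner (\<lambda>q. P q p) (um m)) UNIV) UNIV
     = infsum (\<lambda>m. vinner (mapply P (um m)) (um m)) UNIV" unfolding K_def .
  have "(\<lambda>m. infsum (\<lambda>p. K m p) UNIV) summable_on UNIV"
    using summable_on_Sigma_banach[of "\<lambda>m p. K m p" UNIV "\<lambda>_. UNIV"] S by simp
  moreover have "(\<lambda>m. infsum (\<lambda>p. K m p) UNIV) = (\<lambda>m. vinner (mapply P (um m)) (um m))"
    by (rule ext) (rule infsumI[OF hs])
  ultimately show "(\<lambda>m. vinner (mapply P (um m)) (um m)) summable_on UNIV" by simp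
qed

lemma trace_eq:
  "mtrace (mmul (tensor_id (GammaU U \<sigma>) (rank1 \<xi> \<xi>)) P) = infsum (\<lambda>m. vinner (mapply P (um m)) (um m)) UNIV"
proof -
  have "mtrace (mmul (tensor_id (GammaU U \<sigma>) (rank1 \<xi> \<xi>)) P)
      = infsum (\<lambda>p. infsum (\<lambda>q. tensor_id (GammaU U \<sigma>) (rank1 \<xi> \<xi>) p q * P q p) UNIV) UNIV"
    unfolding mtrace_def mmul_def ..
  also have "\<dots> = infsum (\<lambda>p. infsum (\<lambda>m. um m p * vinner (\<lambda>q. P q p) (um m)) UNIV) UNIV"
    by (rule infsum_cong) (rule row_trace)
  also have "\<dots> = infsum (\<lambda>m. vinner (mapply P (um m)) (um m)) UNIV" by (rule total_trace(1))
  finally show ?thesis .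
qed

end

lemma fiber_l2:
  fixes f :: "'x \<times> 'r \<Rightarrow> complex"
  assumes "l2 UNIV f" shows "l2 UNIV (\<lambda>r. f (x,r))"
proof -
  have "(\<lambda>(x,r). (cmod (f (x,r)))^2) summable_on Sigma UNIV (\<lambda>_. UNIV)"
    using l2_summable[OF assms] by (simp add: case_prod_unfold)
  from summable_on_SigmaD1[of "\<lambda>x r. (cmod (f (x,r)))^2", OF this]
  show ?thesis unfolding l2_def by simp
qed

lemma phiU_l2:
  fixes U :: "'a::finite \<Rightarrow> 'x::finite \<Rightarrow> 'u \<Rightarrow> 'u \<Rightarrow> complex"
  assumes U: "\<And>a x. bop I J (U a x)" and v: "l2 I v"
  shows "l2 J (mapply (phiU U S) v)"
proof -
  have "l2 J (\<lambda>j. \<Sum>x\<in>UNIV. \<Sum>a\<in>UNIV. S x a * mapply (U a x) v j)"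
    by (intro l2_sum l2_scale bop_l2[OF U v]) auto
  moreover have "mapply (phiU U S) v = (\<lambda>j. \<Sum>x\<in>UNIV. \<Sum>a\<in>UNIV. S x a * mapply (U a x) v j)"
    by (rule ext) (rule phiU_apply[where U=U, OF U v])
  ultimately show ?thesis by simp
qed

context spec_setting
begin

lemma lam_sqrt: "(sqrt (lam n))^2 = lam n"
  using lam_nonneg by simp

lemma vinner_uvec:
  fixes U :: "'a \<Rightarrow> 'x \<Rightarrow> 'u \<Rightarrow> 'u \<Rightarrow> complex"
  assumes U: "\<And>a x. bop I J (U a x)" and v: "l2 I v"
  shows "vinner (uvec U v j) (\<gamma> n) = (\<Sum>a\<in>UNIV. \<Sum>x\<in>UNIV. cnj (mapply (U a x) v j) * ptraceR (rank1 \<xi> (\<gamma> n)) x a)"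
proof -
  let ?M = "\<lambda>a x. mapply (U a x) v j"
  have s: "(\<lambda>r. \<xi> (x,r) * cnj (\<gamma> n (a,r))) summable_on UNIV" for x a
    by (rule vinner_summable[OF fiber_l2[OF xi_l2] fiber_l2[OF gam_l2]])
  have "vinner (uvec U v j) (\<gamma> n) = infsum (\<lambda>(a,r). \<Sum>x\<in>UNIV. cnj (?M a x) * (\<xi> (x,r) * cnj (\<gamma> n (a,r)))) (UNIV \<times> UNIV)"
    unfolding vinner_def uvec_def UNIV_Times_UNIV
    by (rule infsum_cong) (auto simp: sum_distrib_left sum_distrib_right mult_ac)
  also have "\<dots> = (\<Sum>a\<in>UNIV. infsum (\<lambda>r. \<Sum>x\<in>UNIV. cnj (?M a x) * (\<xi> (x,r) * cnj (\<gamma> n (a,r)))) UNIV)"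
    by (rule fin_sigma_c(2)) (auto intro!: infsum_finsum(2) summable_on_cmult_right s)
  also have "\<dots> = (\<Sum>a\<in>UNIV. \<Sum>x\<in>UNIV. cnj (?M a x) * infsum (\<lambda>r. \<xi> (x,r) * cnj (\<gamma> n (a,r))) UNIV)"
    by (rule sum.cong[OF refl], subst infsum_finsum(1))
       (auto intro!: summable_on_cmult_right s simp: infsum_cmult_right')
  finally show ?thesis unfolding ptraceR_def rank1_def by simp
qed

lemma phi_uvec:
  fixes U :: "'a \<Rightarrow> 'x \<Rightarrow> 'u \<Rightarrow> 'u \<Rightarrow> complex"
  assumes U: "\<And>a x. bop I J (U a x)" and v: "l2 I v"
  shows "(cmod (mapply (phiU U (rho \<xi> lam \<gamma> n)) v j))^2 = lam n * (cmod (vinner (uvec U v j) (\<gamma> n)))^2"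
proof -
  let ?M = "\<lambda>a x. mapply (U a x) v j"
  let ?c = "\<lambda>x a. ptraceR (rank1 \<xi> (\<gamma> n)) x a"
  have "mapply (phiU U (rho \<xi> lam \<gamma> n)) v j = (\<Sum>x\<in>UNIV. \<Sum>a\<in>UNIV. complex_of_real (sqrt (lam n)) * cnj (?c x a) * ?M a x)"
    unfolding phiU_apply[where U=U, OF U v] rho_def ..
  also have "\<dots> = complex_of_real (sqrt (lam n)) * cnj (\<Sum>a\<in>UNIV. \<Sum>x\<in>UNIV. cnj (?M a x) * ?c x a)"
    by (subst sum.swap) (simp add: sum_distrib_left mult_ac)
  also have "\<dots> = complex_of_real (sqrt (lam n)) * cnj (vinner (uvec U v j) (\<gamma> n))"
    unfolding vinner_uvec[OF U v] ..
  finally have e: "mapply (phiU U (rho \<xi> lam \<gamma> n)) v j = complex_of_real (sqrt (lam n)) * cnj (vinner (uvec U v j) (\<gamma> n))" .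
  show ?thesis unfolding e by (simp add: norm_mult power_mult_distrib lam_sqrt)
qed

end

context spec_setting
begin

definition Phi :: "('a \<Rightarrow> 'x \<Rightarrow> 'u \<Rightarrow> 'u \<Rightarrow> complex) \<Rightarrow> ('u \<Rightarrow> complex) \<Rightarrow> real" where
  "Phi U w = infsum (\<lambda>n. (vnorm (mapply (phiU U (rho \<xi> lam \<gamma> n)) w))^2) UNIV"

end

context g1_setting
begin

definition Fm :: "nat \<Rightarrow> nat \<times> 'u \<Rightarrow> real" where
  "Fm n m = (cmod (mapply (phiU U (rho \<xi> lam \<gamma> n)) (v (fst m)) (snd m)))^2"

lemma quad_um: "((\<lambda>n. Fm n m) has_sum Re (vinner (mapply P (um m)) (um m))) UNIV"
proof -
  have "Fm n m = lam n * (cmod (vinner (um m) (\<gamma> n)))^2" for n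
    unfolding Fm_def um_def by (rule phi_uvec[OF Ubop vl2])
  thus ?thesis using quad[OF um_l2] by simp
qed

lemma s_has_sum:
  "((\<lambda>m. Re (vinner (mapply P (um m)) (um m))) has_sum Re (mtrace (mmul (tensor_id (GammaU U \<sigma>) (rank1 \<xi> \<xi>)) P))) UNIV"
  unfolding trace_eq by (rule has_sum_Re[OF has_sum_infsum[OF total_trace_summable]])

lemma G1_bound:
  assumes CP: "\<And>u. l2 UNIV u \<Longrightarrow> Re (vinner (mapply P u) u) \<le> CP * (vnorm u)^2"
  shows "Re (mtrace (mmul (tensor_id (GammaU U \<sigma>) (rank1 \<xi> \<xi>)) P)) \<le> CP"
proof -
  have "((\<lambda>m. CP * (vnorm (um m))^2) has_sum CP * 1) UNIV"
    by (rule has_sum_cmult_right[OF um_tot])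
  hence "((\<lambda>m. CP * (vnorm (um m))^2) has_sum CP) UNIV" by simp
  thus ?thesis by (rule has_sum_mono[OF s_has_sum]) (rule CP[OF um_l2])
qed

lemma G1:
  shows "((\<lambda>k. Phi U (v k)) has_sum Re (mtrace (mmul (tensor_id (GammaU U \<sigma>) (rank1 \<xi> \<xi>)) P))) UNIV"
    and "(\<lambda>n. (vnorm (mapply (phiU U (rho \<xi> lam \<gamma> n)) (v k)))^2) summable_on UNIV"
proof -
  let ?s = "Re (mtrace (mmul (tensor_id (GammaU U \<sigma>) (rank1 \<xi> \<xi>)) P))"
  let ?R = "\<lambda>m. Re (vinner (mapply P (um m)) (um m))"
  have fibm: "((\<lambda>n. (\<lambda>(m,n). Fm n m) (m,n)) has_sum ?R m) UNIV" for m
    using quad_um[of m] by simp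
  have Rs: "?R summable_on UNIV" using s_has_sum summable_on_def by blast
  have S1: "(\<lambda>(m,n). Fm n m) summable_on Sigma UNIV (\<lambda>_. UNIV)"
    apply (rule summable_on_SigmaI[where g="?R"])
    subgoal for m by (rule fibm)
    subgoal by (rule Rs)
    subgoal by (simp add: Fm_def case_prod_unfold)
    done
  have H1: "((\<lambda>(m,n). Fm n m) has_sum ?s) (Sigma UNIV (\<lambda>_. UNIV))"
    by (rule has_sum_SigmaI[OF _ s_has_sum S1]) (rule fibm)
  have "((\<lambda>(m,n). Fm n m) has_sum ?s) UNIV = ((\<lambda>(k,(n,j)). Fm n (k,j)) has_sum ?s) UNIV"
    by (rule has_sum_reindex_bij_witness[where j="\<lambda>((k,j),n). (k,(n,j))" and i="\<lambda>(k,(n,j)). ((k,j),n)"])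
       (auto simp: case_prod_unfold)
  hence H2: "((\<lambda>(k,z). (\<lambda>(n,j). Fm n (k,j)) z) has_sum ?s) (Sigma UNIV (\<lambda>_. UNIV))"
    using H1 by (simp add: case_prod_unfold)
  have fk: "(\<lambda>z. (\<lambda>(n,j). Fm n (k,j)) z) summable_on UNIV" for k
    using summable_on_SigmaD1[of "\<lambda>k z. (\<lambda>(n,j). Fm n (k,j)) z" UNIV "\<lambda>_. UNIV" k] H2
    unfolding summable_on_def by auto
  have inner: "((\<lambda>n. (vnorm (mapply (phiU U (rho \<xi> lam \<gamma> n)) (v k)))^2) has_sum
        infsum (\<lambda>(n,j). Fm n (k,j)) UNIV) UNIV" for k
  proof -
    have h: "((\<lambda>(n,j). Fm n (k,j)) has_sum infsum (\<lambda>(n,j). Fm n (k,j)) UNIV) (Sigma UNIV (\<lambda>_. UNIV))"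
      using has_sum_infsum[OF fk[of k]] by simp
    show ?thesis
    proof (rule has_sum_Sigma'[OF h])
      fix n :: nat
      have l: "l2 J (mapply (phiU U (rho \<xi> lam \<gamma> n)) (v k))" by (rule phiU_l2[OF Ubop vl2])
      have "((\<lambda>j. (cmod (mapply (phiU U (rho \<xi> lam \<gamma> n)) (v k) j))^2) has_sum
             (vnorm (mapply (phiU U (rho \<xi> lam \<gamma> n)) (v k)))^2) UNIV"
        unfolding vnorm_sq by (rule has_sum_infsum[OF l2_summable[OF l]])
      thus "((\<lambda>j. (\<lambda>(n,j). Fm n (k,j)) (n,j)) has_sum (vnorm (mapply (phiU U (rho \<xi> lam \<gamma> n)) (v k)))^2) UNIV"
        by (simp add: Fm_def)
    qed
  qed
  show "(\<lambda>n. (vnorm (mapply (phiU U (rho \<xi> lam \<gamma> n)) (v k)))^2) summable_on UNIV"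
    using inner summable_on_def by blast
  have PhiE: "Phi U (v k) = infsum (\<lambda>(n,j). Fm n (k,j)) UNIV" for k
    unfolding Phi_def using inner[of k] infsumI by blast
  have "((\<lambda>k. infsum (\<lambda>z. (\<lambda>(n,j). Fm n (k,j)) z) UNIV) has_sum ?s) UNIV"
    by (rule has_sum_Sigma'[OF H2]) (use fk in \<open>auto intro: has_sum_infsum\<close>)
  thus "((\<lambda>k. Phi U (v k)) has_sum ?s) UNIV" unfolding PhiE by simp
qed

end

lemma has_sum_single: "((\<lambda>k. if k = i then c else 0) has_sum c) UNIV"
proof -
  have "((\<lambda>_. c) has_sum sum (\<lambda>_. c) {i}) {i}" by (rule has_sum_finite) simp
  hence "((\<lambda>_. c) has_sum c) {i}" by simp
  thus ?thesis by (subst has_sum_cong_neutral[where S="{i}" and f="\<lambda>_. c", symmetric]) auto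
qed

lemma mapply_zero: "mapply M (\<lambda>_. 0) = (\<lambda>_. 0)"
  by (simp add: mapply_def)

lemma vnorm_zero: "vnorm (\<lambda>_. 0) = 0"
  by (simp add: vnorm_def)

definition vseq :: "('u \<Rightarrow> complex) \<Rightarrow> nat \<Rightarrow> 'u \<Rightarrow> complex" where
  "vseq w = (\<lambda>k. if k = 0 then w else (\<lambda>_. 0))"

lemma vseq_sig: "(\<lambda>k. vinner (mapply T (vseq w k)) (vseq w k)) sums vinner (mapply T w) w"
proof -
  have "(\<lambda>k. vinner (mapply T (vseq w k)) (vseq w k)) = (\<lambda>k. if k = 0 then vinner (mapply T w) w else 0)"
    by (auto simp: vseq_def mapply_zero vinner_zero2)
  thus ?thesis using sums_single[of 0 "\<lambda>_. vinner (mapply T w) w"] by simp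
qed

lemma vseq_norm: "vnorm w = 1 \<Longrightarrow> (\<lambda>k. (vnorm (vseq w k))^2) = (\<lambda>k. if k = 0 then 1 else 0)"
  by (auto simp: vseq_def vnorm_zero)

lemma vector_state:
  assumes w: "l2 I w" "vnorm w = 1"
  shows "normal_state I (\<lambda>T. vinner (mapply T w) w)"
  unfolding normal_state_def
proof (intro exI[of _ "vseq w"] conjI allI impI)
  show "l2 I (vseq w n)" for n using w by (auto simp: vseq_def l2_zero)
  show "(\<lambda>n. (vnorm (vseq w n))^2) sums 1"
    unfolding vseq_norm[OF w(2)] using sums_single[of 0 "\<lambda>_. 1::real"] by simp
  show "(\<lambda>n. vinner (mapply T (vseq w n)) (vseq w n)) sums vinner (mapply T w) w" for T
    by (rule vseq_sig)
qed

context spec_setting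
begin

lemma G1_app:
  fixes U :: "'a \<Rightarrow> 'x \<Rightarrow> 'u \<Rightarrow> 'u \<Rightarrow> complex"
  assumes BI: "block_isometry I J U" and vl2: "\<And>k. l2 I (v k)"
    and vs: "((\<lambda>k. (vnorm (v k))^2) has_sum 1) UNIV"
    and sig: "\<And>T. bop I I T \<Longrightarrow> (\<lambda>k. vinner (mapply T (v k)) (v k)) sums \<sigma> T"
  shows "((\<lambda>k. Phi U (v k)) has_sum Re (mtrace (mmul (tensor_id (GammaU U \<sigma>) (rank1 \<xi> \<xi>)) P))) UNIV"
    and "(\<lambda>n. (vnorm (mapply (phiU U (rho \<xi> lam \<gamma> n)) (v k)))^2) summable_on UNIV"
    and "\<And>CP. (\<And>u. l2 UNIV u \<Longrightarrow> Re (vinner (mapply P u) u) \<le> CP * (vnorm u)^2) \<Longrightarrow>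
          Re (mtrace (mmul (tensor_id (GammaU U \<sigma>) (rank1 \<xi> \<xi>)) P)) \<le> CP"
proof -
  interpret g: g1_setting \<xi> P Nidx lam \<gamma> I J U v \<sigma>
    by (unfold_locales) (use BI vl2 vs sig in auto)
  show "((\<lambda>k. Phi U (v k)) has_sum Re (mtrace (mmul (tensor_id (GammaU U \<sigma>) (rank1 \<xi> \<xi>)) P))) UNIV"
    by (rule g.G1(1))
  show "(\<lambda>n. (vnorm (mapply (phiU U (rho \<xi> lam \<gamma> n)) (v k)))^2) summable_on UNIV"
    by (rule g.G1(2))
  show "\<And>CP. (\<And>u. l2 UNIV u \<Longrightarrow> Re (vinner (mapply P u) u) \<le> CP * (vnorm u)^2) \<Longrightarrow>
          Re (mtrace (mmul (tensor_id (GammaU U \<sigma>) (rank1 \<xi> \<xi>)) P)) \<le> CP"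
    by (rule g.G1_bound)
qed

lemma Phi_zero: "Phi U (\<lambda>_. 0) = 0"
  unfolding Phi_def by (simp add: mapply_zero vnorm_zero)

lemma Phi_unit:
  fixes U :: "'a \<Rightarrow> 'x \<Rightarrow> 'u \<Rightarrow> 'u \<Rightarrow> complex"
  assumes BI: "block_isometry I J U" and w: "l2 I w" "vnorm w = 1"
  shows "Phi U w = Re (mtrace (mmul (tensor_id (GammaU U (\<lambda>T. vinner (mapply T w) w)) (rank1 \<xi> \<xi>)) P))"
    and "(\<lambda>n. (vnorm (mapply (phiU U (rho \<xi> lam \<gamma> n)) w))^2) summable_on UNIV"
proof -
  have vl2: "\<And>k. l2 I (vseq w k)" using w by (auto simp: vseq_def l2_zero)
  have vs: "((\<lambda>k. (vnorm (vseq w k))^2) has_sum 1) UNIV"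
    unfolding vseq_norm[OF w(2)] by (rule has_sum_single)
  note G = G1_app[OF BI vl2 vs vseq_sig]
  have "(\<lambda>k. Phi U (vseq w k)) = (\<lambda>k. if k = 0 then Phi U w else 0)"
    by (auto simp: vseq_def Phi_zero)
  hence "((\<lambda>k. Phi U (vseq w k)) has_sum Phi U w) UNIV" using has_sum_single by simp
  thus "Phi U w = Re (mtrace (mmul (tensor_id (GammaU U (\<lambda>T. vinner (mapply T w) w)) (rank1 \<xi> \<xi>)) P))"
    using G(1) has_sum_unique by blast
  show "(\<lambda>n. (vnorm (mapply (phiU U (rho \<xi> lam \<gamma> n)) w))^2) summable_on UNIV"
    using G(2)[of 0] by (simp add: vseq_def)
qed

lemma Phi_scale:
  "Phi U (\<lambda>i. c * w i) = (cmod c)^2 * Phi U w"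
  "(\<lambda>n. (vnorm (mapply (phiU U (rho \<xi> lam \<gamma> n)) (\<lambda>i. c * w i)))^2) =
   (\<lambda>n. (cmod c)^2 * (vnorm (mapply (phiU U (rho \<xi> lam \<gamma> n)) w))^2)"
proof -
  show e: "(\<lambda>n. (vnorm (mapply (phiU U (rho \<xi> lam \<gamma> n)) (\<lambda>i. c * w i)))^2) =
   (\<lambda>n. (cmod c)^2 * (vnorm (mapply (phiU U (rho \<xi> lam \<gamma> n)) w))^2)"
    by (simp add: mapply_scale vnorm_scale power_mult_distrib)
  show "Phi U (\<lambda>i. c * w i) = (cmod c)^2 * Phi U w"
    unfolding Phi_def e by (rule infsum_cmult_right')
qed

end

lemma infsum_pair0:
  fixes g :: "'u \<Rightarrow> 'b::{comm_monoid_add,t2_space}"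
  shows "infsum (\<lambda>(l::nat,i::'u). if l = 0 then g i else 0) UNIV = infsum g UNIV"
proof -
  have "infsum (\<lambda>(l::nat,i::'u). if l = 0 then g i else 0) UNIV = infsum (\<lambda>z. g (snd z)) (range (Pair (0::nat)))"
  proof (rule infsum_cong_neutral)
    fix z :: "nat \<times> 'u" assume "z \<in> UNIV - range (Pair 0)"
    then show "(case z of (l, i) \<Rightarrow> if l = 0 then g i else 0) = 0"
      by (cases z) auto
  qed auto
  also have "\<dots> = infsum ((\<lambda>z. g (snd z)) \<circ> Pair (0::nat)) UNIV"
    by (rule infsum_reindex) (auto simp: inj_on_def)
  finally show ?thesis by (simp add: o_def)
qed

lemma summable_pair0:
  fixes g :: "'u \<Rightarrow> 'b::{comm_monoid_add,topological_space}"
  assumes "g summable_on UNIV"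
  shows "(\<lambda>(l::nat,i::'u). if l = 0 then g i else 0) summable_on UNIV"
proof -
  have "((\<lambda>z. g (snd z)) \<circ> Pair 0) summable_on UNIV" using assms by (simp add: o_def)
  hence "(\<lambda>z. g (snd z)) summable_on (range (Pair (0::nat)))"
    by (subst summable_on_reindex) (auto simp: inj_on_def)
  thus ?thesis
  proof (rule summable_on_cong_neutral[THEN iffD1, rotated -1])
    fix z :: "nat \<times> 'u" assume "z \<in> UNIV - range (Pair 0)"
    then show "(case z of (l, i) \<Rightarrow> if l = 0 then g i else 0) = 0"
      by (cases z) auto
  qed auto
qed

lemma w_of_f:
  fixes N :: nat
  assumes f: "l2 ({..<N} \<times> I) f"
  shows "l2 I (\<lambda>i. f (0,i))" and "vnorm (\<lambda>i. f (0,i)) \<le> vnorm f"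
proof -
  have fs: "(\<lambda>z. (cmod (f z))^2) summable_on UNIV" by (rule l2_summable[OF f])
  have s1: "(\<lambda>z. (cmod (f z))^2) summable_on (range (Pair (0::nat)))"
    by (rule summable_on_subset_banach[OF fs]) auto
  have s2: "(\<lambda>i. (cmod (f (0,i)))^2) summable_on UNIV"
    using s1 by (subst (asm) summable_on_reindex) (auto simp: inj_on_def o_def)
  show "l2 I (\<lambda>i. f (0,i))"
    unfolding l2_def using s2 l2_out[OF f] by auto
  have "infsum (\<lambda>i. (cmod (f (0,i)))^2) UNIV = infsum (\<lambda>z. (cmod (f z))^2) (range (Pair (0::nat)))"
    by (subst infsum_reindex) (auto simp: inj_on_def o_def)
  also have "\<dots> \<le> infsum (\<lambda>z. (cmod (f z))^2) UNIV"
    by (rule infsum_mono_neutral[OF s1 fs]) auto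
  finally show "vnorm (\<lambda>i. f (0,i)) \<le> vnorm f" unfolding vnorm_def by (rule real_sqrt_le_mono)
qed

definition lift0 :: "('u \<Rightarrow> complex) \<Rightarrow> nat \<times> 'u \<Rightarrow> complex" where
  "lift0 w = (\<lambda>(l,i). if l = 0 then w i else 0)"

lemma lift0:
  assumes w: "l2 I w" and N: "0 < N"
  shows "l2 ({..<N} \<times> I) (lift0 w)" and "vnorm (lift0 w) = vnorm w" and "(\<lambda>i. lift0 w (0,i)) = w"
proof -
  have e: "(\<lambda>z. (cmod (lift0 w z))^2) = (\<lambda>(l,i). if l = 0 then (cmod (w i))^2 else 0)"
    by (auto simp: lift0_def)
  show "l2 ({..<N} \<times> I) (lift0 w)"
    unfolding l2_def e using summable_pair0[OF l2_summable[OF w]] l2_out[OF w] N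
    by (auto simp: lift0_def)
  show "vnorm (lift0 w) = vnorm w" unfolding vnorm_def e infsum_pair0 ..
  show "(\<lambda>i. lift0 w (0,i)) = w" by (simp add: lift0_def)
qed

lemma phiU_zero: "phiU U (\<lambda>_ _. 0) = (\<lambda>_ _. 0)"
  by (simp add: phiU_def)

lemma ampl_apply:
  fixes U :: "'a::finite \<Rightarrow> 'x::finite \<Rightarrow> 'u \<Rightarrow> 'u \<Rightarrow> complex"
  shows "mapply (ampl U N (\<lambda>k l. if l = 0 then \<rho> k else (\<lambda>_ _. 0))) f (k,j) =
         (if k < N then mapply (phiU U (\<rho> k)) (\<lambda>i. f (0,i)) j else 0)"
proof -
  have e: "ampl U N (\<lambda>k l. if l = 0 then \<rho> k else (\<lambda>_ _. 0)) (k,j) z * f z =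
      (if k < N then (case z of (l,i) \<Rightarrow> if l = 0 then phiU U (\<rho> k) j i * f (0, i) else 0) else 0)" for z
    by (cases z) (auto simp: ampl_def phiU_zero)
  show ?thesis
  proof (cases "k < N")
    case True
    have "mapply (ampl U N (\<lambda>k l. if l = 0 then \<rho> k else (\<lambda>_ _. 0))) f (k,j)
        = infsum (\<lambda>(l::nat,i::'u). if l = 0 then phiU U (\<rho> k) j i * f (0, i) else 0) UNIV"
      unfolding mapply_def e using True by simp
    also have "\<dots> = mapply (phiU U (\<rho> k)) (\<lambda>i. f (0,i)) j"
      unfolding infsum_pair0 mapply_def ..
    finally show ?thesis using True by simp
  next
    case False
    thus ?thesis unfolding mapply_def e by simp
  qed
qed

lemma ampl_norm:
  fixes U :: "'a::finite \<Rightarrow> 'x::finite \<Rightarrow> 'u \<Rightarrow> 'u \<Rightarrow> complex"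
  assumes U: "\<And>a x. bop I J (U a x)" and w: "l2 I (\<lambda>i. f (0,i))"
  shows "(vnorm (mapply (ampl U N (\<lambda>k l. if l = 0 then \<rho> k else (\<lambda>_ _. 0))) f))^2 =
         (\<Sum>n<N. (vnorm (mapply (phiU U (\<rho> n)) (\<lambda>i. f (0,i))))^2)"
proof -
  let ?w = "\<lambda>i. f (0,i)"
  have sm: "(\<lambda>j. (cmod (mapply (phiU U (\<rho> n)) ?w j))^2) summable_on UNIV" for n
    by (rule l2_summable[OF phiU_l2[OF U w]])
  have "(vnorm (mapply (ampl U N (\<lambda>k l. if l = 0 then \<rho> k else (\<lambda>_ _. 0))) f))^2
      = infsum (\<lambda>z. (cmod (mapply (ampl U N (\<lambda>k l. if l = 0 then \<rho> k else (\<lambda>_ _. 0))) f z))^2) UNIV"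
    by (rule vnorm_sq)
  also have "\<dots> = infsum (\<lambda>(n,j). (cmod (mapply (phiU U (\<rho> n)) ?w j))^2) ({..<N} \<times> UNIV)"
    by (rule infsum_cong_neutral) (auto simp: ampl_apply split: if_splits)
  also have "\<dots> = (\<Sum>n<N. infsum (\<lambda>j. (cmod (mapply (phiU U (\<rho> n)) ?w j))^2) UNIV)"
    by (rule fin_sigma_r(2)) (auto intro: sm)
  also have "\<dots> = (\<Sum>n<N. (vnorm (mapply (phiU U (\<rho> n)) ?w))^2)"
    by (simp add: vnorm_sq)
  finally show ?thesis .
qed

theorem theorem4p7:
  fixes R :: "('u set \<times> 'u set \<times> ('a::finite \<Rightarrow> 'x::finite \<Rightarrow> 'u \<Rightarrow> 'u \<Rightarrow> complex)) set"
    and \<xi> :: "'x \<times> 'r \<Rightarrow> complex"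
    and P :: "'a \<times> 'r \<Rightarrow> 'a \<times> 'r \<Rightarrow> complex"
    and Nidx :: "nat set" and lam :: "nat \<Rightarrow> real" and \<gamma> :: "nat \<Rightarrow> 'a \<times> 'r \<Rightarrow> complex"
  assumes "resource R"
    and "l2 UNIV \<xi>" and "vnorm \<xi> = 1"
    and "bop UNIV UNIV P" and "positive_op P" and "opnorm UNIV P \<le> 1"
    and "spectral_decomp P Nidx lam \<gamma>"
  shows "omegaR R \<xi> P = (Minf1_norm R (rho \<xi> lam \<gamma>))\<^sup>2"
proof -
  note res = assms(1)
  interpret spec_setting \<xi> P Nidx lam \<gamma>
    by unfold_locales (use assms in auto)
  obtain CP where CP: "CP \<ge> 0" "\<And>u. l2 UNIV u \<Longrightarrow> Re (vinner (mapply P u) u) \<le> CP * (vnorm u)^2"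
    using P_CP by blast
  define \<rho> where "\<rho> = rho \<xi> lam \<gamma>"
  define col :: "nat \<Rightarrow> nat \<Rightarrow> 'x \<Rightarrow> 'a \<Rightarrow> complex" where "col = (\<lambda>k l. if l = 0 then \<rho> k else (\<lambda>_ _. 0))"
  define tr where "tr \<Gamma> = Re (mtrace (mmul (tensor_id \<Gamma> (rank1 \<xi> \<xi>)) P))" for \<Gamma>
  define S where "S = {tr \<Gamma> | \<Gamma>. \<Gamma> \<in> QC R}"
  have omega: "omegaR R \<xi> P = Sup S" unfolding omegaR_def S_def tr_def ..
  have r1: "\<forall>(I,J,U)\<in>R. block_isometry I J U"
    using res unfolding resource_def by (elim conjE) assumption
  have r3: "\<forall>S :: 'x \<Rightarrow> 'a \<Rightarrow> complex. S \<noteq> (\<lambda>_ _. 0) \<longrightarrow> (\<exists>(I, J, U) \<in> R. phiU U S \<noteq> (\<lambda>_ _. 0))"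
    using res unfolding resource_def by (elim conjE) assumption
  have BIR: "block_isometry I J U" if "(I,J,U) \<in> R" for I J U
    using r1[rule_format, OF that] by simp
  have QCI: "GammaU U \<sigma> \<in> QC R" if "(I,J,U) \<in> R" "normal_state I \<sigma>" for I J U \<sigma>
    using that unfolding QC_def by blast
  have S1: "\<exists>I J U (v::nat \<Rightarrow> 'u \<Rightarrow> complex). (I,J,U) \<in> R \<and> (\<forall>k. l2 I (v k)) \<and> ((\<lambda>k. (vnorm (v k))^2) has_sum 1) UNIV \<and>
              ((\<lambda>k. Phi U (v k)) has_sum s) UNIV \<and> s \<le> CP" if "s \<in> S" for s
  proof -
    obtain \<Gamma> where G: "s = tr \<Gamma>" "\<Gamma> \<in> QC R" using \<open>s \<in> S\<close> unfolding S_def by blast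
    obtain I J U \<sigma> where IJU: "\<Gamma> = GammaU U \<sigma>" "(I,J,U) \<in> R" "normal_state I \<sigma>"
      using G(2) unfolding QC_def by blast
    obtain v where v: "\<And>n. l2 I (v n)" "(\<lambda>n. (vnorm (v n))^2) sums 1"
      "\<And>T. bop I I T \<Longrightarrow> (\<lambda>n. vinner (mapply T (v n)) (v n)) sums \<sigma> T"
      using IJU(3) unfolding normal_state_def by blast
    have vs: "((\<lambda>k. (vnorm (v k))^2) has_sum 1) UNIV"
      by (rule sums_nonneg_imp_has_sum[OF v(2)]) simp
    note G1 = G1_app[OF BIR[OF IJU(2)] v(1) vs v(3)]
    have hs: "((\<lambda>k. Phi U (v k)) has_sum s) UNIV" using G1(1) G(1) IJU(1) unfolding tr_def by simp
    have trle: "Re (mtrace (mmul (tensor_id (GammaU U \<sigma>) (rank1 \<xi> \<xi>)) P)) \<le> CP"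
      by (rule G1(3)) (simp_all add: CP(2))
    have sle: "s \<le> CP" using trle G(1) IJU(1) unfolding tr_def by simp
    show ?thesis using IJU(2) v(1) vs hs sle by blast
  qed
  have S_CP: "s \<le> CP" if "s \<in> S" for s using S1[OF that] by blast
  have Phi_nonneg: "0 \<le> Phi U w" for U w unfolding Phi_def by (rule infsum_nonneg) simp
  have S_nonneg: "0 \<le> s" if sS: "s \<in> S" for s
  proof -
    obtain I J U and v :: "nat \<Rightarrow> 'u \<Rightarrow> complex" where "((\<lambda>k. Phi U (v k)) has_sum s) UNIV" using S1[OF sS] by blast
    thus ?thesis by (rule has_sum_nonneg) (rule Phi_nonneg)
  qed
  have S_bdd: "bdd_above S" using S_CP by (auto simp: bdd_above_def)
  have unit_in_S: "Phi U w \<in> S" and unit_summ: "(\<lambda>n. (vnorm (mapply (phiU U (\<rho> n)) w))^2) summable_on UNIV"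
    if "(I,J,U) \<in> R" "l2 I w" "vnorm w = 1" for I J U w
  proof -
    note PU = Phi_unit[OF BIR[OF that(1)] that(2,3)]
    have "GammaU U (\<lambda>T. vinner (mapply T w) w) \<in> QC R"
      by (rule QCI[OF that(1) vector_state[OF that(2,3)]])
    thus "Phi U w \<in> S" unfolding S_def tr_def PU(1) by blast
    show "(\<lambda>n. (vnorm (mapply (phiU U (\<rho> n)) w))^2) summable_on UNIV" unfolding \<rho>_def by (rule PU(2))
  qed
  have S_ne: "S \<noteq> {}"
  proof -
    have ne1: "(\<lambda>(_::'x) (_::'a). 1::complex) \<noteq> (\<lambda>_ _. 0)" by (auto simp: fun_eq_iff)
    have "\<exists>(I, J, U) \<in> R. phiU U (\<lambda>(_::'x) (_::'a). 1::complex) \<noteq> (\<lambda>_ _. 0)"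
      using r3 ne1 by blast
    then obtain I J U where IJU: "(I,J,U) \<in> R" "phiU U (\<lambda>(_::'x) (_::'a). 1::complex) \<noteq> (\<lambda>_ _. 0)"
      by auto
    then obtain j i where ji: "phiU U (\<lambda>(_::'x) (_::'a). 1::complex) j i \<noteq> 0" by (auto simp: fun_eq_iff)
    then obtain a x where "U a x j i \<noteq> 0" unfolding phiU_def
      by (metis (no_types, lifting) mult_1 sum.neutral)
    hence iI: "i \<in> I" using bop_zero BIR[OF IJU(1)] unfolding block_isometry_def by metis
    show ?thesis using unit_in_S[OF IJU(1) l2_evec[OF iI] vnorm_evec] by blast
  qed
  have om0: "0 \<le> Sup S"
  proof -
    obtain s where "s \<in> S" using S_ne by blast
    thus ?thesis using S_nonneg cSup_upper[OF _ S_bdd] by (meson order_trans)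
  qed
  have Phi_gen: "(\<lambda>n. (vnorm (mapply (phiU U (\<rho> n)) w))^2) summable_on UNIV \<and>
                 Phi U w \<le> (vnorm w)^2 * Sup S \<and> Phi U w \<le> (vnorm w)^2 * CP"
    if IJU: "(I,J,U) \<in> R" and w: "l2 I w" for I J U w
  proof (cases "vnorm w = 0")
    case True
    hence w0: "w = (\<lambda>_. 0)" by (rule vnorm_zero_imp[OF w])
    show ?thesis unfolding w0 by (simp add: mapply_zero vnorm_zero Phi_zero)
  next
    case False
    hence np: "vnorm w > 0" using vnorm_nonneg[of w] by simp
    define wh where "wh = (\<lambda>i. complex_of_real (1 / vnorm w) * w i)"
    have whl: "l2 I wh" unfolding wh_def by (rule l2_scale[OF w])
    have whn: "vnorm wh = 1" unfolding wh_def vnorm_scale using np by (simp add: norm_divide)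
    have wwh: "w = (\<lambda>i. complex_of_real (vnorm w) * wh i)" unfolding wh_def using np by auto
    have PE: "Phi U w = (vnorm w)^2 * Phi U wh"
      by (subst wwh, subst Phi_scale(1)) simp
    have in_S: "Phi U wh \<in> S" by (rule unit_in_S[OF IJU whl whn])
    have "(\<lambda>n. (vnorm (mapply (phiU U (\<rho> n)) w))^2) = (\<lambda>n. (vnorm w)^2 * (vnorm (mapply (phiU U (\<rho> n)) wh))^2)"
      by (subst wwh, unfold \<rho>_def, subst Phi_scale(2)) simp
    moreover have "(\<lambda>n. (vnorm w)^2 * (vnorm (mapply (phiU U (\<rho> n)) wh))^2) summable_on UNIV"
      by (rule summable_on_cmult_right[OF unit_summ[OF IJU whl whn]])
    moreover have "Phi U wh \<le> Sup S" by (rule cSup_upper[OF in_S S_bdd])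
    moreover have "Phi U wh \<le> CP" by (rule S_CP[OF in_S])
    ultimately show ?thesis unfolding PE by (auto intro: mult_left_mono)
  qed
  have Ubop: "\<And>a x. bop I J (U a x)" if "(I,J,U) \<in> R" for I J U
    using BIR[OF that] unfolding block_isometry_def by blast
  have Qb: "(vnorm (mapply (ampl U N col) f))^2 \<le> Sup S \<and> (vnorm (mapply (ampl U N col) f))^2 \<le> CP"
    if IJU: "(I,J,U) \<in> R" and f: "l2 ({..<N} \<times> I) f" "vnorm f \<le> 1" for I J U N f
  proof -
    let ?w = "\<lambda>i. f (0,i)"
    have wl: "l2 I ?w" and wn: "vnorm ?w \<le> vnorm f" using w_of_f[OF f(1)] by auto
    have wn1: "(vnorm ?w)^2 \<le> 1" using wn f(2) vnorm_nonneg[of ?w]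
      by (metis abs_of_nonneg abs_square_le_1 order_trans)
    note PG = Phi_gen[OF IJU wl]
    have "(vnorm (mapply (ampl U N col) f))^2 = (\<Sum>n<N. (vnorm (mapply (phiU U (\<rho> n)) ?w))^2)"
      unfolding col_def by (rule ampl_norm[OF Ubop[OF IJU] wl])
    also have "\<dots> \<le> Phi U ?w"
      unfolding Phi_def \<rho>_def[symmetric] by (rule finite_sum_le_infsum) (use PG in auto)
    finally have le: "(vnorm (mapply (ampl U N col) f))^2 \<le> Phi U ?w" .
    have "Phi U ?w \<le> Sup S" using PG wn1 om0 by (meson mult_left_le_one_le order_trans zero_le_power2)
    moreover have "Phi U ?w \<le> CP" using PG wn1 CP(1) by (meson mult_left_le_one_le order_trans zero_le_power2)
    ultimately show ?thesis using le by simp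
  qed
  define opn :: "nat \<Rightarrow> 'u set \<times> 'u set \<times> ('a \<Rightarrow> 'x \<Rightarrow> 'u \<Rightarrow> 'u \<Rightarrow> complex) \<Rightarrow> real"
    where "opn N t = (case t of (I,J,U) \<Rightarrow> opnorm ({..<N} \<times> I) (ampl U N col))" for N t
  have opn_props: "0 \<le> opn N t \<and> opn N t \<le> sqrt (Sup S) \<and> opn N t \<le> sqrt CP \<and>
      (\<forall>f. l2 ({..<N} \<times> fst t) f \<and> vnorm f \<le> 1 \<longrightarrow> vnorm (mapply (ampl (snd (snd t)) N col) f) \<le> opn N t)"
    if t: "t \<in> R" for N t
  proof -
    obtain I J U where tt: "t = (I,J,U)" by (cases t) auto
    have IJU: "(I,J,U) \<in> R" using t tt by simp
    let ?A = "{vnorm (mapply (ampl U N col) f) | f. l2 ({..<N} \<times> I) f \<and> vnorm f \<le> 1}"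
    have o: "opn N t = Sup ?A" unfolding opn_def tt opnorm_def by simp
    have z: "0 \<in> ?A"
    proof -
      have "l2 ({..<N} \<times> I) (\<lambda>_. 0)" "vnorm (\<lambda>_::nat \<times> 'u. 0::complex) \<le> 1"
        by (auto simp: l2_zero vnorm_zero)
      moreover have "vnorm (mapply (ampl U N col) (\<lambda>_. 0)) = 0" by (simp add: mapply_zero vnorm_zero)
      ultimately show ?thesis by (metis (mono_tags, lifting) mem_Collect_eq)
    qed
    have bS: "y \<le> sqrt (Sup S)" and bC: "y \<le> sqrt CP" if yA: "y \<in> ?A" for y
    proof -
      obtain f where f: "y = vnorm (mapply (ampl U N col) f)" "l2 ({..<N} \<times> I) f" "vnorm f \<le> 1"
        using yA by blast
      have "y^2 \<le> Sup S" "y^2 \<le> CP" using Qb[OF IJU f(2,3)] f(1) by auto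
      thus "y \<le> sqrt (Sup S)" "y \<le> sqrt CP" by (auto intro: real_le_rsqrt)
    qed
    have bdd: "bdd_above ?A" using bC by (auto simp: bdd_above_def)
    have ne: "?A \<noteq> {}" using z by blast
    show ?thesis
    proof (intro conjI allI impI)
      show "0 \<le> opn N t" unfolding o by (rule cSup_upper[OF z bdd])
      show "opn N t \<le> sqrt (Sup S)" unfolding o by (rule cSup_least[OF ne]) (rule bS)
      show "opn N t \<le> sqrt CP" unfolding o by (rule cSup_least[OF ne]) (rule bC)
      fix f assume "l2 ({..<N} \<times> fst t) f \<and> vnorm f \<le> 1"
      hence "vnorm (mapply (ampl U N col) f) \<in> ?A" using tt by auto
      hence "vnorm (mapply (ampl U N col) f) \<le> Sup ?A" by (rule cSup_upper[OF _ bdd])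
      thus "vnorm (mapply (ampl (snd (snd t)) N col) f) \<le> opn N t" using o tt by simp
    qed
  qed
  have R_ne: "R \<noteq> {}" using S_ne unfolding S_def QC_def by blast
  define MN where "MN N = (SUP t\<in>R. opn N t)" for N
  have MN_eq: "MN1_norm R \<rho> N = MN N" for N
    unfolding MN1_norm_def Mn_norm_def MN_def opn_def col_def ..
  have bddR: "bdd_above (opn N ` R)" for N
    using opn_props by (auto simp: bdd_above_def intro!: exI[of _ "sqrt CP"])
  have MN_props: "MN N \<le> sqrt (Sup S) \<and> MN N \<le> sqrt CP \<and> (\<forall>t\<in>R. opn N t \<le> MN N) \<and> 0 \<le> MN N" for N
  proof (intro conjI ballI)
    show "MN N \<le> sqrt (Sup S)" unfolding MN_def by (rule cSUP_least[OF R_ne]) (use opn_props in blast)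
    show "MN N \<le> sqrt CP" unfolding MN_def by (rule cSUP_least[OF R_ne]) (use opn_props in blast)
    show "opn N t \<le> MN N" if "t \<in> R" for t unfolding MN_def by (rule cSUP_upper[OF that bddR])
    obtain t where "t \<in> R" using R_ne by blast
    thus "0 \<le> MN N" using opn_props[OF \<open>t \<in> R\<close>, of N] cSUP_upper[OF \<open>t \<in> R\<close> bddR[of N]]
      unfolding MN_def by linarith
  qed
  define M where "M = Minf1_norm R \<rho>"
  have M_eq: "M = (SUP N. MN N)" unfolding M_def Minf1_norm_def MN_eq ..
  have bddN: "bdd_above (range MN)" using MN_props by (auto simp: bdd_above_def intro!: exI[of _ "sqrt CP"])
  have M_le: "M \<le> sqrt (Sup S)" unfolding M_eq by (rule cSUP_least) (use MN_props in auto)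
  have M_ge: "MN N \<le> M" for N unfolding M_eq by (rule cSUP_upper[OF _ bddN]) simp
  have M0: "0 \<le> M" using M_ge[of 0] MN_props[of 0] by linarith
  have Phi_M: "Phi U w \<le> M^2 * (vnorm w)^2" if IJU: "(I,J,U) \<in> R" and w: "l2 I w" for I J U w
  proof (cases "vnorm w = 0")
    case True
    hence w0: "w = (\<lambda>_. 0)" by (rule vnorm_zero_imp[OF w])
    show ?thesis unfolding w0 by (simp add: Phi_zero)
  next
    case False
    hence np: "vnorm w > 0" using vnorm_nonneg[of w] by simp
    define wh where "wh = (\<lambda>i. complex_of_real (1 / vnorm w) * w i)"
    have whl: "l2 I wh" unfolding wh_def by (rule l2_scale[OF w])
    have whn: "vnorm wh = 1" unfolding wh_def vnorm_scale using np by (simp add: norm_divide)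
    have wwh: "w = (\<lambda>i. complex_of_real (vnorm w) * wh i)" unfolding wh_def using np by auto
    have terms: "(\<lambda>n. (vnorm (mapply (phiU U (\<rho> n)) w))^2) = (\<lambda>n. (vnorm w)^2 * (vnorm (mapply (phiU U (\<rho> n)) wh))^2)"
      by (subst wwh, unfold \<rho>_def, subst Phi_scale(2)) simp
    have partial: "(\<Sum>n<N. (vnorm (mapply (phiU U (\<rho> n)) wh))^2) \<le> M^2" if N: "0 < N" for N
    proof -
      note L = lift0[OF whl N]
      have "(vnorm (mapply (ampl U N col) (lift0 wh)))^2 = (\<Sum>n<N. (vnorm (mapply (phiU U (\<rho> n)) (\<lambda>i. lift0 wh (0,i))))^2)"
        unfolding col_def by (rule ampl_norm[OF Ubop[OF IJU]]) (simp add: L(3) whl)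
      hence "(\<Sum>n<N. (vnorm (mapply (phiU U (\<rho> n)) wh))^2) = (vnorm (mapply (ampl U N col) (lift0 wh)))^2"
        by (simp add: L(3))
      also have "\<dots> \<le> M^2"
      proof -
        have q: "vnorm (mapply (ampl U N col) (lift0 wh)) \<le> opn N (I,J,U)"
          using opn_props[OF IJU, of N] L(1,2) whn by auto
        also have "\<dots> \<le> MN N" using MN_props[of N] IJU by blast
        also have "\<dots> \<le> M" by (rule M_ge)
        finally show ?thesis using vnorm_nonneg by (intro power_mono) auto
      qed
      finally show ?thesis .
    qed
    have "Phi U w = infsum (\<lambda>n. (vnorm w)^2 * (vnorm (mapply (phiU U (\<rho> n)) wh))^2) UNIV"
      unfolding Phi_def \<rho>_def[symmetric] terms ..
    also have "\<dots> \<le> (vnorm w)^2 * M^2"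
    proof (rule infsum_le_finite_sums)
      show "(\<lambda>n. (vnorm w)^2 * (vnorm (mapply (phiU U (\<rho> n)) wh))^2) summable_on UNIV"
        by (rule summable_on_cmult_right[OF unit_summ[OF IJU whl whn]])
      fix F :: "nat set" assume F: "finite F" "F \<subseteq> UNIV"
      obtain k where k: "F \<subseteq> {..<k}" using finite_nat_bounded[OF F(1)] by blast
      have "(\<Sum>n\<in>F. (vnorm w)^2 * (vnorm (mapply (phiU U (\<rho> n)) wh))^2)
          \<le> (\<Sum>n<Suc k. (vnorm w)^2 * (vnorm (mapply (phiU U (\<rho> n)) wh))^2)"
        by (rule sum_mono2) (use k in auto)
      also have "\<dots> = (vnorm w)^2 * (\<Sum>n<Suc k. (vnorm (mapply (phiU U (\<rho> n)) wh))^2)"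
        by (rule sum_distrib_left[symmetric])
      also have "\<dots> \<le> (vnorm w)^2 * M^2" by (intro mult_left_mono partial) auto
      finally show "(\<Sum>n\<in>F. (vnorm w)^2 * (vnorm (mapply (phiU U (\<rho> n)) wh))^2) \<le> (vnorm w)^2 * M^2" .
    qed
    finally show ?thesis by (simp add: mult.commute)
  qed
  have S_M: "s \<le> M^2" if sS: "s \<in> S" for s
  proof -
    obtain I J U and v :: "nat \<Rightarrow> 'u \<Rightarrow> complex" where IJU: "(I,J,U) \<in> R" and v: "\<forall>k. l2 I (v k)"
      and vs: "((\<lambda>k. (vnorm (v k))^2) has_sum 1) UNIV" and hs: "((\<lambda>k. Phi U (v k)) has_sum s) UNIV"
      using S1[OF sS] by blast
    have "((\<lambda>k. M^2 * (vnorm (v k))^2) has_sum M^2 * 1) UNIV" by (rule has_sum_cmult_right[OF vs])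
    hence "((\<lambda>k. M^2 * (vnorm (v k))^2) has_sum M^2) UNIV" by simp
    thus ?thesis by (rule has_sum_mono[OF hs]) (use Phi_M[OF IJU] v in auto)
  qed
  have "Sup S \<le> M^2" by (rule cSup_least[OF S_ne S_M])
  moreover have "M^2 \<le> Sup S"
  proof -
    have "M^2 \<le> (sqrt (Sup S))^2" using M0 M_le by (intro power_mono) auto
    thus ?thesis using om0 by simp
  qed
  ultimately show ?thesis unfolding omega M_def \<rho>_def by simp
qed

end
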